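(* In the setting described in the context, assume $\widetilde H$ is positive semi-definite on $L_{2,\mu}$. Then for every $k\in\mathbb N$, \[ \|H-S\|_{L_{2,\pi}\to L_{2,\pi}}^k\le\|H^{(k)}-S\|_{L_{2,\pi}\to L_{2,\pi}}. \]
   Context: Let $K\subseteq\mathbb R^d$ be Borel and $\rho:K\to[0,\infty)$ measurable with $0<\int_K\rho\,\mathrm dx<\infty$; $\pi(A)=\int_A\rho\,\mathrm dx/\int_K\rho\,\mathrm dx$. For $t\ge0$, $K(t)=\{x\in K:\rho(x)\ge t\}$, assume $0<\mathrm{vol}_d(K(t))<\infty$ for $t\in(0,\|\rho\|_\infty)$, and $U_t$ is the uniform distribution on $K(t)$. For each $t$, $H_t$ is a Markov kernel on $K(t)$ (extended by $0$ outside $K(t)$, measurable in $(t,x)$), reversible with respect to $U_t$, acting by $H_tf(x)=\int f(y)H_t(x,\mathrm dy)$. $L_{2,\pi}=L_2(K,\pi)$. Let $K_\rho=\{(x,t):x\in K,\ t\in[0,\rho(x)]\}$, $\mu$ uniform on $K_\rho$, $L_{2,\mu}=L_2(K_\rho,\mu)$, $\widetilde Hf(x,s)=\int_{K(s)}f(y,s)H_s(x,\mathrm dy)$. For $k\in\mathbb N$, $H^{(k)}f(x)=\frac1{\rho(x)}\int_0^{\rho(x)}H_t^kf(x)\,\mathrm dt$ on $L_{2,\pi}$, $H=H^{(1)}$ is the hybrid slice sampler, and $S(f)=\int_Kf\,\mathrm d\pi$ as an operator onto constants. *)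

theory Defs
  imports "HOL-Probability.Probability"
begin

definition level :: "'a set \<Rightarrow> ('a \<Rightarrow> real) \<Rightarrow> real \<Rightarrow> 'a set" where
  "level K \<rho> t = {x \<in> K. \<rho> x \<ge> t}"

definition pi_meas :: "'a::euclidean_space set \<Rightarrow> ('a \<Rightarrow> real) \<Rightarrow> 'a measure" where
  "pi_meas K \<rho> = density lborel (\<lambda>x. ennreal (indicator K x * \<rho> x) /
      (\<integral>\<^sup>+ y. ennreal (indicator K y * \<rho> y) \<partial>lborel))"

definition Krho :: "'a set \<Rightarrow> ('a \<Rightarrow> real) \<Rightarrow> ('a \<times> real) set" where
  "Krho K \<rho> = {(x, t). x \<in> K \<and> 0 \<le> t \<and> t \<le> \<rho> x}"

definition mu_meas :: "'a::euclidean_space set \<Rightarrow> ('a \<Rightarrow> real) \<Rightarrow> ('a \<times> real) measure" where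
  "mu_meas K \<rho> = uniform_measure lborel (Krho K \<rho>)"

fun kpow :: "(real \<Rightarrow> 'a \<Rightarrow> 'a measure) \<Rightarrow> real \<Rightarrow> nat \<Rightarrow> ('a \<Rightarrow> real) \<Rightarrow> 'a \<Rightarrow> real" where
  "kpow H t 0 f = f"
| "kpow H t (Suc n) f = (\<lambda>x. \<integral>y. kpow H t n f y \<partial>(H t x))"

definition Hk :: "('a \<Rightarrow> real) \<Rightarrow> (real \<Rightarrow> 'a \<Rightarrow> 'a measure) \<Rightarrow> nat \<Rightarrow> ('a \<Rightarrow> real) \<Rightarrow> 'a \<Rightarrow> real" where
  "Hk \<rho> H k f x = (LINT t:{0..\<rho> x}|lborel. kpow H t k f x) / \<rho> x"

definition Htilde :: "'a set \<Rightarrow> ('a \<Rightarrow> real) \<Rightarrow> (real \<Rightarrow> 'a \<Rightarrow> 'a measure) \<Rightarrow>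
    ('a \<times> real \<Rightarrow> real) \<Rightarrow> 'a \<times> real \<Rightarrow> real" where
  "Htilde K \<rho> H f = (\<lambda>(x, s). \<integral>y. indicator (level K \<rho> s) y * f (y, s) \<partial>(H s x))"

definition L2 :: "'a measure \<Rightarrow> ('a \<Rightarrow> real) set" where
  "L2 M = {f. f \<in> borel_measurable M \<and> (\<integral>\<^sup>+ x. ennreal ((f x)\<^sup>2) \<partial>M) < \<infinity>}"

definition opnorm :: "'a measure \<Rightarrow> (('a \<Rightarrow> real) \<Rightarrow> 'a \<Rightarrow> real) \<Rightarrow> ennreal" where
  "opnorm M T = Inf {c. \<forall>f \<in> L2 M.
      (\<integral>\<^sup>+ x. ennreal ((T f x)\<^sup>2) \<partial>M) \<le> c\<^sup>2 * (\<integral>\<^sup>+ x. ennreal ((f x)\<^sup>2) \<partial>M)}"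

definition psd :: "'a measure \<Rightarrow> (('a \<Rightarrow> real) \<Rightarrow> 'a \<Rightarrow> real) \<Rightarrow> bool" where
  "psd M T \<longleftrightarrow> (\<forall>f \<in> L2 M. (\<integral>x. T f x * f x \<partial>M) \<ge> 0)"

end

theory Submission
  imports Defs
begin


lemma quad_cs:
  fixes a b c :: real
  assumes q: "\<And>t. 0 \<le> a - 2*t*b + t^2*c" and c: "0 \<le> c"
  shows "b^2 \<le> a*c"
proof (cases "c = 0")
  case True
  show ?thesis
  proof (rule ccontr)
    assume "\<not> ?thesis"
    with True have b: "b \<noteq> 0" by simp
    have "0 \<le> a - 2*((\<bar>a\<bar>+1)/(2*b))*b" using q[of "(\<bar>a\<bar>+1)/(2*b)"] True by simp
    also have "\<dots> = a - (\<bar>a\<bar> + 1)" using b by (simp add: field_simps)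
    finally show False by simp
  qed
next
  case False
  with c have c: "0 < c" by simp
  have "0 \<le> a - 2*(b/c)*b + (b/c)^2*c" by (rule q)
  also have "\<dots> = a - b^2/c" using c by (simp add: field_simps power2_eq_square)
  finally have "b^2/c \<le> a" by simp
  then show ?thesis using c by (simp add: field_simps)
qed

lemma moments:
  fixes m :: "nat \<Rightarrow> real"
  assumes nn: "\<And>n. 0 \<le> m n" and lc: "\<And>n. (m (Suc n))^2 \<le> m n * m (Suc (Suc n))"
  shows "m 1 ^ (Suc j) \<le> m 0 ^ j * m (Suc j)"
proof -
  have P: "m 1 * m j \<le> m 0 * m (Suc j)" for j
  proof (induction j)
    case 0 show ?case by simp
  next
    case (Suc j)
    show ?case
    proof (cases "m (Suc j) = 0")
      case True then show ?thesis using nn by simp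
    next
      case False
      then have pos: "0 < m (Suc j)" using nn[of "Suc j"] by simp
      have "m 1 * m (Suc j) * m (Suc j) = m 1 * (m (Suc j))^2" by (simp add: power2_eq_square)
      also have "\<dots> \<le> m 1 * (m j * m (Suc (Suc j)))" using lc[of j] nn[of 1] by (rule mult_left_mono)
      also have "\<dots> = (m 1 * m j) * m (Suc (Suc j))" by simp
      also have "\<dots> \<le> (m 0 * m (Suc j)) * m (Suc (Suc j))" using Suc nn by (intro mult_right_mono) auto
      finally have "m 1 * m (Suc j) * m (Suc j) \<le> m 0 * m (Suc (Suc j)) * m (Suc j)" by (simp add: ac_simps)
      then show ?thesis using pos by simp
    qed
  qed
  show ?thesis
  proof (induction j)
    case 0 show ?case by simp
  next
    case (Suc j)
    have "m 1 ^ Suc (Suc j) = m 1 * m 1 ^ Suc j" by simp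
    also have "\<dots> \<le> m 1 * (m 0 ^ j * m (Suc j))" using Suc nn[of 1] by (rule mult_left_mono)
    also have "\<dots> = m 0 ^ j * (m 1 * m (Suc j))" by simp
    also have "\<dots> \<le> m 0 ^ j * (m 0 * m (Suc (Suc j)))" using P[of "Suc j"] nn by (intro mult_left_mono) auto
    finally show ?case by (simp add: ac_simps)
  qed
qed

lemma L2_iff: "f \<in> L2 M \<longleftrightarrow> f \<in> borel_measurable M \<and> integrable M (\<lambda>x. (f x)^2)"
  unfolding L2_def by (auto simp: integrable_iff_bounded)

lemma L2_meas: "f \<in> L2 M \<Longrightarrow> f \<in> borel_measurable M"
  by (simp add: L2_def)

lemma L2_sq: "f \<in> L2 M \<Longrightarrow> integrable M (\<lambda>x. (f x)^2)"
  by (simp add: L2_iff)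

lemma L2_nn: "f \<in> L2 M \<Longrightarrow> (\<integral>\<^sup>+ x. ennreal ((f x)^2) \<partial>M) = ennreal (\<integral> x. (f x)^2 \<partial>M)"
  by (rule nn_integral_eq_integral) (auto simp: L2_sq)

lemma L2_mult: assumes "f \<in> L2 M" "g \<in> L2 M" shows "integrable M (\<lambda>x. f x * g x)"
proof (rule Bochner_Integration.integrable_bound)
  show "integrable M (\<lambda>x. (f x)^2 + (g x)^2)" using assms by (auto simp: L2_sq)
  show "(\<lambda>x. f x * g x) \<in> borel_measurable M" using assms by (intro borel_measurable_times) (auto simp: L2_meas)
  show "AE x in M. norm (f x * g x) \<le> norm ((f x)^2 + (g x)^2)"
  proof (intro AE_I2)
    fix x
    have "0 \<le> (\<bar>f x\<bar> - \<bar>g x\<bar>)^2" by simp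
    then have "2 * \<bar>f x\<bar> * \<bar>g x\<bar> \<le> (f x)^2 + (g x)^2" by (simp add: power2_eq_square algebra_simps)
    moreover have "0 \<le> \<bar>f x\<bar> * \<bar>g x\<bar>" by simp
    ultimately have h: "\<bar>f x\<bar> * \<bar>g x\<bar> \<le> (f x)^2 + (g x)^2" by linarith
    then show "norm (f x * g x) \<le> norm ((f x)^2 + (g x)^2)" by (simp add: abs_mult)
  qed
qed

lemma L2_lin: assumes "f \<in> L2 M" "g \<in> L2 M" shows "(\<lambda>x. f x + c * g x) \<in> L2 M"
proof -
  have "integrable M (\<lambda>x. (f x + c * g x)^2)"
  proof -
    have "(\<lambda>x. (f x + c * g x)^2) = (\<lambda>x. (f x)^2 + 2 * c * (f x * g x) + c^2 * (g x)^2)"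
      by (simp add: power2_eq_square algebra_simps)
    moreover have "integrable M (\<lambda>x. (f x)^2 + 2 * c * (f x * g x) + c^2 * (g x)^2)" using assms L2_mult[OF assms] by (auto simp: L2_sq)
    ultimately show ?thesis by simp
  qed
  then show ?thesis using assms by (auto simp: L2_iff)
qed

lemma L2_diff: assumes "f \<in> L2 M" "g \<in> L2 M" shows "(\<lambda>x. f x - g x) \<in> L2 M"
  using L2_lin[OF assms, of "-1"] by simp

lemma L2_add: assumes "f \<in> L2 M" "g \<in> L2 M" shows "(\<lambda>x. f x + g x) \<in> L2 M"
  using L2_lin[OF assms, of "1"] by simp

lemma L2_cmult: assumes "f \<in> L2 M" shows "(\<lambda>x. c * f x) \<in> L2 M"
proof -
  have "(\<lambda>x::'a. 0::real) \<in> L2 M" by (simp add: L2_def)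
  from L2_lin[OF this assms, of c] show ?thesis by simp
qed

lemma L2_const: "finite_measure M \<Longrightarrow> (\<lambda>x. c) \<in> L2 M"
  by (simp add: L2_iff finite_measure.integrable_const)

lemma L2_cs: assumes f: "f \<in> L2 M" and g: "g \<in> L2 M"
  shows "(\<integral>x. f x * g x \<partial>M)^2 \<le> (\<integral>x. (f x)^2 \<partial>M) * (\<integral>x. (g x)^2 \<partial>M)"
proof (rule quad_cs)
  fix t :: real
  have "0 \<le> (\<integral>x. (f x - t * g x)^2 \<partial>M)" by simp
  also have "(\<integral>x. (f x - t * g x)^2 \<partial>M) = (\<integral>x. (f x)^2 + (- 2 * t) * (f x * g x) + t^2 * (g x)^2 \<partial>M)"
    by (intro Bochner_Integration.integral_cong) (auto simp: power2_eq_square algebra_simps)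
  also have "\<dots> = (\<integral>x. (f x)^2 \<partial>M) - 2 * t * (\<integral>x. f x * g x \<partial>M) + t^2 * (\<integral>x. (g x)^2 \<partial>M)"
    using L2_mult[OF f g] f g by (simp add: L2_sq)
  finally show "0 \<le> (\<integral>x. (f x)^2 \<partial>M) - 2 * t * (\<integral>x. f x * g x \<partial>M) + t^2 * (\<integral>x. (g x)^2 \<partial>M)" .
qed simp

lemma L2_cs': assumes f: "f \<in> L2 M" and g: "g \<in> L2 M"
  shows "(\<integral>x. f x * g x \<partial>M) \<le> sqrt (\<integral>x. (f x)^2 \<partial>M) * sqrt (\<integral>x. (g x)^2 \<partial>M)"
proof -
  have "(\<integral>x. f x * g x \<partial>M) \<le> \<bar>\<integral>x. f x * g x \<partial>M\<bar>" by simp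
  also have "\<dots> = sqrt ((\<integral>x. f x * g x \<partial>M)^2)" by simp
  also have "\<dots> \<le> sqrt ((\<integral>x. (f x)^2 \<partial>M) * (\<integral>x. (g x)^2 \<partial>M))"
    using L2_cs[OF f g] by (rule real_sqrt_le_mono)
  finally show ?thesis by (simp add: real_sqrt_mult)
qed




locale slice =
  fixes K :: "'a::euclidean_space set" and \<rho> :: "'a \<Rightarrow> real"
    and H :: "real \<Rightarrow> 'a \<Rightarrow> 'a measure"
  assumes K_borel[measurable]: "K \<in> sets borel"
    and rho_meas[measurable]: "\<rho> \<in> borel_measurable borel"
    and rho_nonneg: "\<forall>x\<in>K. 0 \<le> \<rho> x"
    and rho_int_pos: "0 < (\<integral>\<^sup>+ x. ennreal (indicator K x * \<rho> x) \<partial>lborel)"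
    and rho_int_fin: "(\<integral>\<^sup>+ x. ennreal (indicator K x * \<rho> x) \<partial>lborel) < \<infinity>"
    and H_markov: "\<forall>t\<ge>0. \<forall>x \<in> level K \<rho> t.
        prob_space (H t x) \<and> sets (H t x) = sets borel \<and> emeasure (H t x) (level K \<rho> t) = 1"
    and H_zero: "\<forall>t\<ge>0. \<forall>x. x \<notin> level K \<rho> t \<longrightarrow> H t x = null_measure borel"
    and H_meas: "(\<lambda>(t, x). H t x) \<in> measurable (restrict_space borel {0..} \<Otimes>\<^sub>M borel) (subprob_algebra borel)"
    and H_rev: "\<forall>t\<ge>0. 0 < emeasure lborel (level K \<rho> t) \<and> emeasure lborel (level K \<rho> t) < \<infinity> \<longrightarrow>
        (\<forall>A \<in> sets borel. \<forall>B \<in> sets borel. A \<subseteq> level K \<rho> t \<longrightarrow> B \<subseteq> level K \<rho> t \<longrightarrow>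
          (\<integral>\<^sup>+ x. indicator A x * emeasure (H t x) B \<partial>uniform_measure lborel (level K \<rho> t)) =
          (\<integral>\<^sup>+ x. indicator B x * emeasure (H t x) A \<partial>uniform_measure lborel (level K \<rho> t)))"
    and Htilde_psd: "psd (mu_meas K \<rho>) (Htilde K \<rho> H)"
begin

abbreviation "L \<equiv> level K \<rho>"
abbreviation "KR \<equiv> Krho K \<rho>"

definition H' :: "real \<Rightarrow> 'a \<Rightarrow> 'a measure" where "H' s x = H (max s 0) x"

lemma H'_pos: "0 \<le> s \<Longrightarrow> H' s x = H s x" by (simp add: H'_def)

lemma ind_L: "indicator (L s) y = (if y \<in> K \<and> s \<le> \<rho> y then 1 else (0::real))"
  by (auto simp: level_def indicator_def)

lemma L_sets[measurable]: "L s \<in> sets borel"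
proof -
  have "L s = {y \<in> space borel. y \<in> K \<and> s \<le> \<rho> y}" by (auto simp: level_def)
  also have "\<dots> \<in> sets borel" by measurable
  finally show ?thesis .
qed

lemma ind_L_meas[measurable]: "(\<lambda>(y, s). indicator (L s) y :: real) \<in> borel_measurable (borel \<Otimes>\<^sub>M borel)"
proof -
  have "(\<lambda>(y, s). indicator (L s) y :: real) = (\<lambda>p. if fst p \<in> K \<and> snd p \<le> \<rho> (fst p) then 1 else 0)"
    by (auto simp: ind_L)
  also have "\<dots> \<in> borel_measurable (borel \<Otimes>\<^sub>M borel)"
    by measurable
  finally show ?thesis .
qed

lemma ind_L_meas'[measurable]: "(\<lambda>(y, s). ennreal (indicator (L s) y)) \<in> borel_measurable (borel \<Otimes>\<^sub>M borel)"
  using ind_L_meas by measurable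

lemma KR_eq: "KR = {p. fst p \<in> K \<and> 0 \<le> snd p \<and> snd p \<le> \<rho> (fst p)}"
  by (auto simp: Krho_def)

lemma KR_sets'[measurable]: "KR \<in> sets (borel \<Otimes>\<^sub>M borel :: ('a \<times> real) measure)"
proof -
  have "KR = {p \<in> space (borel \<Otimes>\<^sub>M borel). fst p \<in> K \<and> 0 \<le> snd p \<and> snd p \<le> \<rho> (fst p)}" by (auto simp: Krho_def space_pair_measure)
  also have "\<dots> \<in> sets (borel \<Otimes>\<^sub>M borel)" by measurable
  finally show ?thesis .
qed

lemma KR_sets[measurable]: "KR \<in> sets (borel :: ('a \<times> real) measure)"
  by (subst borel_prod[symmetric]) (rule KR_sets')

lemma H'_meas[measurable]: "(\<lambda>p. H' (snd p) (fst p)) \<in> measurable (borel \<Otimes>\<^sub>M borel :: ('a \<times> real) measure) (subprob_algebra borel)"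
proof -
  have m: "(\<lambda>p::'a\<times>real. (max (snd p) 0, fst p)) \<in> measurable (borel \<Otimes>\<^sub>M borel) (restrict_space borel {0..} \<Otimes>\<^sub>M borel)"
  proof (intro measurable_Pair measurable_restrict_space2)
    show "(\<lambda>p::'a\<times>real. max (snd p) 0) \<in> borel \<Otimes>\<^sub>M borel \<rightarrow>\<^sub>M borel" by measurable
  qed auto
  have "(\<lambda>p. H' (snd p) (fst p)) = (\<lambda>(t, x). H t x) \<circ> (\<lambda>p::'a\<times>real. (max (snd p) 0, fst p))"
    by (auto simp: H'_def)
  then show ?thesis using measurable_comp[OF m H_meas] by simp
qed

lemma sets_H': "sets (H' s x) = sets borel"
  using H_markov H_zero unfolding H'_def
  by (cases "x \<in> L (max s 0)") auto

lemma subprob_H': "subprob_space (H' s x)"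
  using measurable_space[OF H'_meas, of "(x,s)"] by (simp add: space_subprob_algebra space_pair_measure)

end



context slice begin

lemma H'_kernel[measurable]: "(\<lambda>x. H' s x) \<in> measurable borel (subprob_algebra borel)"
proof -
  have "(\<lambda>x::'a. (x, s)) \<in> measurable borel (borel \<Otimes>\<^sub>M borel)" by measurable
  from measurable_comp[OF this H'_meas] show ?thesis by (simp add: comp_def)
qed

definition I :: "real \<Rightarrow> ('a \<Rightarrow> ennreal) \<Rightarrow> 'a \<Rightarrow> ennreal" where
  "I s f x = (\<integral>\<^sup>+ y. indicator (L s) y * f y \<partial>H' s x)"

definition \<Phi> :: "real \<Rightarrow> ('a \<Rightarrow> ennreal) \<Rightarrow> ('a \<Rightarrow> ennreal) \<Rightarrow> ennreal" where
  "\<Phi> s f g = (\<integral>\<^sup>+ x. indicator (L s) x * f x * I s g x \<partial>lborel)"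

lemma meas_H'[measurable (raw)]: "f \<in> borel_measurable borel \<Longrightarrow> f \<in> borel_measurable (H' s x)"
  by (simp add: sets_H' cong: measurable_cong_sets)

lemma I_meas[measurable]: "f \<in> borel_measurable borel \<Longrightarrow> I s f \<in> borel_measurable borel"
proof -
  assume [measurable]: "f \<in> borel_measurable borel"
  have "(\<lambda>M. integral\<^sup>N M (\<lambda>y. indicator (L s) y * f y)) \<in> borel_measurable (subprob_algebra borel)"
    by (rule nn_integral_measurable_subprob_algebra) measurable
  from measurable_comp[OF H'_kernel this] show ?thesis
    unfolding I_def[abs_def] comp_def .
qed

lemma I_cmult: "f \<in> borel_measurable borel \<Longrightarrow> I s (\<lambda>y. c * f y) x = c * I s f x"
  unfolding I_def by (subst nn_integral_cmult[symmetric]) (auto simp: ac_simps)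

lemma I_add: "f \<in> borel_measurable borel \<Longrightarrow> g \<in> borel_measurable borel \<Longrightarrow> I s (\<lambda>y. f y + g y) x = I s f x + I s g x"
  unfolding I_def by (subst nn_integral_add[symmetric]) (auto simp: distrib_left)

lemma I_SUP: "(\<And>i. U i \<in> borel_measurable borel) \<Longrightarrow> incseq U \<Longrightarrow> I s (SUP i. U i) x = (SUP i. I s (U i) x)"
  unfolding I_def
  apply (subst nn_integral_monotone_convergence_SUP[symmetric])
  by (auto simp: incseq_def le_fun_def SUP_mult_left_ennreal SUP_apply image_comp intro!: mult_left_mono)

lemma I_mono: "incseq U \<Longrightarrow> incseq (\<lambda>i. I s (U i) x)"
  unfolding I_def incseq_def le_fun_def by (auto intro!: nn_integral_mono mult_left_mono)


lemma vol_fin: assumes "0 < s" shows "emeasure lborel (L s) < \<infinity>"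
proof -
  have "ennreal s * emeasure lborel (L s) = (\<integral>\<^sup>+ x. ennreal s * indicator (L s) x \<partial>lborel)"
    by (simp add: nn_integral_cmult_indicator)
  also have "\<dots> \<le> (\<integral>\<^sup>+ x. ennreal (indicator K x * \<rho> x) \<partial>lborel)"
    by (intro nn_integral_mono) (auto simp: level_def indicator_def intro: ennreal_leI)
  also have "\<dots> < \<infinity>" by (rule rho_int_fin)
  finally have "ennreal s * emeasure lborel (L s) < \<infinity>" .
  with assms show ?thesis
    by (auto simp: ennreal_mult_less_top)
qed

lemma Phi_ind:
  assumes s: "0 < s" and A[measurable]: "A \<in> sets borel" and B[measurable]: "B \<in> sets borel"
  shows "\<Phi> s (indicator A) (indicator B) = \<Phi> s (indicator B) (indicator A)"
proof (cases "emeasure lborel (L s) = 0")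
  case True
  then have ae: "AE x in lborel. x \<notin> L s"
    by (intro AE_I[of _ _ "L s"]) auto
  have "\<Phi> s f g = 0" for f g
    unfolding \<Phi>_def using ae by (subst nn_integral_cong_AE[where v="\<lambda>_. 0"]) auto
  then show ?thesis by simp
next
  case False
  define v where "v = emeasure lborel (L s)"
  have v0: "v \<noteq> 0" and vt: "v \<noteq> \<top>" using False vol_fin[OF s] by (auto simp: v_def)
  have HH: "H' s x = H s x" for x using s by (simp add: H'_pos)
  have Iind: "I s (indicator C) x = emeasure (H' s x) (C \<inter> L s)" if [measurable]: "C \<in> sets borel" for C x
  proof -
    have "I s (indicator C) x = (\<integral>\<^sup>+ y. indicator (C \<inter> L s) y \<partial>H' s x)"
      unfolding I_def by (intro nn_integral_cong) (auto simp: indicator_def)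
    also have "\<dots> = emeasure (H' s x) (C \<inter> L s)"
      by (rule nn_integral_indicator) (simp add: sets_H')
    finally show ?thesis .
  qed
  have emeas[measurable]: "(\<lambda>x. emeasure (H' s x) C) \<in> borel_measurable borel" if [measurable]: "C \<in> sets borel" for C
    using measurable_comp[OF H'_kernel measurable_emeasure_subprob_algebra[OF that]] by (simp add: comp_def)
  have main: "\<Phi> s (indicator C) (indicator D) =
      v * (\<integral>\<^sup>+ x. indicator (C \<inter> L s) x * emeasure (H s x) (D \<inter> L s) \<partial>uniform_measure lborel (L s))"
    if [measurable]: "C \<in> sets borel" "D \<in> sets borel" for C D
  proof -
    have "\<Phi> s (indicator C) (indicator D) = (\<integral>\<^sup>+ x. indicator (C \<inter> L s) x * emeasure (H' s x) (D \<inter> L s) \<partial>lborel)"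
      unfolding \<Phi>_def by (intro nn_integral_cong) (auto simp: Iind indicator_def)
    also have "\<dots> = (\<integral>\<^sup>+ x. indicator (C \<inter> L s) x * emeasure (H' s x) (D \<inter> L s) * indicator (L s) x \<partial>lborel) / v * v"
    proof -
      have "(\<integral>\<^sup>+ x. indicator (C \<inter> L s) x * emeasure (H' s x) (D \<inter> L s) * indicator (L s) x \<partial>lborel)
          = (\<integral>\<^sup>+ x. indicator (C \<inter> L s) x * emeasure (H' s x) (D \<inter> L s) \<partial>lborel)"
        by (intro nn_integral_cong) (auto simp: indicator_def)
      then show ?thesis using v0 vt by (simp add: ennreal_divide_times less_top)
    qed
    also have "(\<integral>\<^sup>+ x. indicator (C \<inter> L s) x * emeasure (H' s x) (D \<inter> L s) * indicator (L s) x \<partial>lborel) / v =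
        (\<integral>\<^sup>+ x. indicator (C \<inter> L s) x * emeasure (H' s x) (D \<inter> L s) \<partial>uniform_measure lborel (L s))"
      unfolding v_def by (subst nn_integral_uniform_measure) auto
    finally show ?thesis by (simp add: HH mult.commute)
  qed
  have "0 < emeasure lborel (L s) \<and> emeasure lborel (L s) < \<infinity>"
    using v0 vt by (auto simp: v_def zero_less_iff_neq_zero less_top)
  with H_rev s have rev: "(\<integral>\<^sup>+ x. indicator (A \<inter> L s) x * emeasure (H s x) (B \<inter> L s) \<partial>uniform_measure lborel (L s)) =
      (\<integral>\<^sup>+ x. indicator (B \<inter> L s) x * emeasure (H s x) (A \<inter> L s) \<partial>uniform_measure lborel (L s))"
    by auto
  show ?thesis using main[of A B] main[of B A] rev by simp
qed


lemma Phi_cmult1: "u \<in> borel_measurable borel \<Longrightarrow> g \<in> borel_measurable borel \<Longrightarrow> \<Phi> s (\<lambda>x. c * u x) g = c * \<Phi> s u g"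
  unfolding \<Phi>_def by (subst nn_integral_cmult[symmetric]) (auto simp: ac_simps)

lemma Phi_cmult2: "u \<in> borel_measurable borel \<Longrightarrow> f \<in> borel_measurable borel \<Longrightarrow> \<Phi> s f (\<lambda>x. c * u x) = c * \<Phi> s f u"
  unfolding \<Phi>_def by (subst nn_integral_cmult[symmetric]) (auto simp: ac_simps I_cmult)

lemma Phi_add1: "u \<in> borel_measurable borel \<Longrightarrow> v \<in> borel_measurable borel \<Longrightarrow> g \<in> borel_measurable borel \<Longrightarrow>
    \<Phi> s (\<lambda>x. v x + u x) g = \<Phi> s v g + \<Phi> s u g"
  unfolding \<Phi>_def by (subst nn_integral_add[symmetric]) (auto simp: algebra_simps)

lemma Phi_add2: "u \<in> borel_measurable borel \<Longrightarrow> v \<in> borel_measurable borel \<Longrightarrow> f \<in> borel_measurable borel \<Longrightarrow>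
    \<Phi> s f (\<lambda>x. v x + u x) = \<Phi> s f v + \<Phi> s f u"
  unfolding \<Phi>_def by (subst nn_integral_add[symmetric]) (auto simp: algebra_simps I_add)

lemma Phi_SUP1: "(\<And>i. U i \<in> borel_measurable borel) \<Longrightarrow> incseq U \<Longrightarrow> g \<in> borel_measurable borel \<Longrightarrow>
    \<Phi> s (SUP i. U i) g = (SUP i. \<Phi> s (U i) g)"
  unfolding \<Phi>_def
  apply (subst nn_integral_monotone_convergence_SUP[symmetric])
  by (auto simp: incseq_def le_fun_def SUP_mult_left_ennreal SUP_mult_right_ennreal SUP_apply image_comp
      intro!: mult_left_mono mult_right_mono)

lemma Phi_SUP2: "(\<And>i. U i \<in> borel_measurable borel) \<Longrightarrow> incseq U \<Longrightarrow> f \<in> borel_measurable borel \<Longrightarrow>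
    \<Phi> s f (SUP i. U i) = (SUP i. \<Phi> s f (U i))"
  unfolding \<Phi>_def
  apply (simp add: I_SUP)
  apply (subst nn_integral_monotone_convergence_SUP[symmetric])
  using I_mono[of U s] 
  by (auto simp: incseq_def le_fun_def SUP_mult_left_ennreal SUP_apply image_comp
      intro!: mult_left_mono)

lemma Phi_sym:
  assumes s: "0 < s" and f: "f \<in> borel_measurable borel" and g: "g \<in> borel_measurable borel"
  shows "\<Phi> s f g = \<Phi> s g f"
proof -
  have ind: "\<Phi> s f (indicator B) = \<Phi> s (indicator B) f" if f: "f \<in> borel_measurable borel" and B: "B \<in> sets borel" for f B
    using f
  proof induct
    case (cong f g) then show ?case by (metis ext space_borel UNIV_I)
  next
    case (set A) then show ?case using Phi_ind[OF s _ B] by simp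
  next
    case (mult u c) then show ?case using B by (simp add: Phi_cmult1 Phi_cmult2)
  next
    case (add u v) then show ?case using B by (simp add: Phi_add1 Phi_add2)
  next
    case (seq U)
    have "\<Phi> s (SUP i. U i) (indicator B) = (SUP i. \<Phi> s (U i) (indicator B))"
      using B seq by (intro Phi_SUP1) auto
    also have "\<dots> = (SUP i. \<Phi> s (indicator B) (U i))" using seq(3) by simp
    also have "\<dots> = \<Phi> s (indicator B) (SUP i. U i)"
      using B seq by (intro Phi_SUP2[symmetric]) auto
    finally show ?case .
  qed
  show ?thesis using g f
  proof (induct arbitrary: f)
    case (cong h g) then show ?case by (metis ext space_borel UNIV_I)
  next
    case (set A) then show ?case using ind by simp
  next
    case (mult u c) then show ?case by (simp add: Phi_cmult1 Phi_cmult2)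
  next
    case (add u v) then show ?case by (simp add: Phi_add1 Phi_add2)
  next
    case (seq U)
    have "\<Phi> s f (SUP i. U i) = (SUP i. \<Phi> s f (U i))"
      using seq by (intro Phi_SUP2) auto
    also have "\<dots> = (SUP i. \<Phi> s (U i) f)" using seq by simp
    also have "\<dots> = \<Phi> s (SUP i. U i) f"
      using seq by (intro Phi_SUP1[symmetric]) auto
    finally show ?case .
  qed
qed

end



context slice begin

lemma ind_L_comp[measurable (raw)]:
  "f \<in> M \<rightarrow>\<^sub>M borel \<Longrightarrow> g \<in> M \<rightarrow>\<^sub>M borel \<Longrightarrow> (\<lambda>x. indicator (L (g x)) (f x) :: real) \<in> borel_measurable M"
proof -
  assume [measurable]: "f \<in> M \<rightarrow>\<^sub>M borel" "g \<in> M \<rightarrow>\<^sub>M borel"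
  show ?thesis unfolding ind_L by measurable
qed

lemma ind_L_comp'[measurable (raw)]:
  "f \<in> M \<rightarrow>\<^sub>M borel \<Longrightarrow> g \<in> M \<rightarrow>\<^sub>M borel \<Longrightarrow> (\<lambda>x. indicator (L (g x)) (f x) :: ennreal) \<in> borel_measurable M"
proof -
  assume [measurable]: "f \<in> M \<rightarrow>\<^sub>M borel" "g \<in> M \<rightarrow>\<^sub>M borel"
  have "(\<lambda>x. indicator (L (g x)) (f x) :: ennreal) = (\<lambda>x. ennreal (indicator (L (g x)) (f x)))"
    by (auto simp: indicator_def)
  also have "\<dots> \<in> borel_measurable M" by measurable
  finally show ?thesis .
qed

lemma ind_KR: "indicator KR (x, s) = (indicator (L s) x :: 'b::{zero_neq_one})" if "0 \<le> s"
  using that by (auto simp: Krho_def level_def indicator_def)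

definition Tp :: "('a \<times> real \<Rightarrow> ennreal) \<Rightarrow> 'a \<times> real \<Rightarrow> ennreal" where
  "Tp F p = (\<integral>\<^sup>+ y. indicator (L (snd p)) y * F (y, snd p) \<partial>H' (snd p) (fst p))"

abbreviation "LL \<equiv> (lborel \<Otimes>\<^sub>M lborel :: ('a \<times> real) measure)"

lemma Tp_meas[measurable]:
  assumes [measurable]: "F \<in> borel_measurable (borel \<Otimes>\<^sub>M borel)"
  shows "Tp F \<in> borel_measurable (borel \<Otimes>\<^sub>M borel)"
proof -
  have "(\<lambda>p. integral\<^sup>N (H' (snd p) (fst p)) (\<lambda>y. indicator (L (snd p)) y * F (y, snd p)))
     \<in> borel_measurable (borel \<Otimes>\<^sub>M borel)"
    by (rule nn_integral_measurable_subprob_algebra2[where N=borel]) measurable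
  then show ?thesis unfolding Tp_def[abs_def] .
qed

lemma Tp_I: "Tp F (x, s) = I s (\<lambda>y. F (y, s)) x"
  by (simp add: Tp_def I_def)

lemma LL_meas: "f \<in> borel_measurable (borel \<Otimes>\<^sub>M borel) \<Longrightarrow> f \<in> borel_measurable LL"
  by (simp cong: measurable_cong_sets add: sets_pair_measure_cong[OF sets_lborel sets_lborel])

lemma NN_sym:
  assumes F[measurable]: "F \<in> borel_measurable (borel \<Otimes>\<^sub>M borel)"
    and G[measurable]: "G \<in> borel_measurable (borel \<Otimes>\<^sub>M borel)"
  shows "(\<integral>\<^sup>+ p. indicator KR p * F p * Tp G p \<partial>LL) = (\<integral>\<^sup>+ p. indicator KR p * G p * Tp F p \<partial>LL)"
proof -
  have eq: "(\<integral>\<^sup>+ p. indicator KR p * F p * Tp G p \<partial>LL) =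
      (\<integral>\<^sup>+ s. \<integral>\<^sup>+ x. indicator KR (x, s) * F (x, s) * Tp G (x, s) \<partial>lborel \<partial>lborel)"
    if [measurable]: "F \<in> borel_measurable (borel \<Otimes>\<^sub>M borel)" "G \<in> borel_measurable (borel \<Otimes>\<^sub>M borel)" for F G
  proof -
    have "(\<lambda>p. indicator KR p * F p * Tp G p) \<in> borel_measurable (borel \<Otimes>\<^sub>M borel)" by measurable
    then show ?thesis by (subst lborel_pair.nn_integral_snd[symmetric]) (auto intro: LL_meas)
  qed
  have pt: "(\<integral>\<^sup>+ x. indicator KR (x, s) * F (x, s) * Tp G (x, s) \<partial>lborel) =
      (\<integral>\<^sup>+ x. indicator KR (x, s) * G (x, s) * Tp F (x, s) \<partial>lborel)" if "s \<noteq> 0" for s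
  proof (cases "s < 0")
    case True then show ?thesis by (simp add: Krho_def indicator_def)
  next
    case False
    with that have s: "0 < s" by simp
    have [measurable]: "(\<lambda>x. F (x, s)) \<in> borel_measurable borel" "(\<lambda>x. G (x, s)) \<in> borel_measurable borel"
      by measurable
    show ?thesis
      using Phi_sym[OF s, of "\<lambda>x. F (x, s)" "\<lambda>x. G (x, s)"] s
      by (simp add: \<Phi>_def ind_KR Tp_I)
  qed
  show ?thesis
    unfolding eq[OF F G] eq[OF G F]
    by (rule nn_integral_cong_AE, rule eventually_mono[OF AE_lborel_singleton[of 0]]) (rule pt)
qed

end



context slice begin

definition Zr :: real where "Zr = enn2real (\<integral>\<^sup>+ x. ennreal (indicator K x * \<rho> x) \<partial>lborel)"

lemma Zn: "(\<integral>\<^sup>+ x. ennreal (indicator K x * \<rho> x) \<partial>lborel) = ennreal Zr"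
  using rho_int_fin by (simp add: Zr_def less_top)

lemma Zr_pos: "0 < Zr"
  using rho_int_pos rho_int_fin by (simp add: Zr_def enn2real_positive_iff)

lemma emeasure_KR: "emeasure LL KR = ennreal Zr"
proof -
  have "emeasure LL KR = (\<integral>\<^sup>+ p. indicator KR p \<partial>LL)"
    by (simp add: sets_pair_measure_cong[OF sets_lborel sets_lborel])
  also have "\<dots> = (\<integral>\<^sup>+ x. \<integral>\<^sup>+ t. indicator KR (x, t) \<partial>lborel \<partial>lborel)"
    by (subst lborel.nn_integral_fst[symmetric]) (auto intro!: LL_meas)
  also have "\<dots> = (\<integral>\<^sup>+ x. ennreal (indicator K x * \<rho> x) \<partial>lborel)"
  proof (intro nn_integral_cong)
    fix x
    show "(\<integral>\<^sup>+ t. indicator KR (x, t) \<partial>lborel) = ennreal (indicator K x * \<rho> x)"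
    proof (cases "x \<in> K")
      case True
      then have "(\<lambda>t. indicator KR (x, t) :: ennreal) = indicator {0..\<rho> x}"
        by (auto simp: Krho_def indicator_def)
      then show ?thesis using True rho_nonneg by simp
    next
      case False then show ?thesis by (simp add: Krho_def indicator_def)
    qed
  qed
  finally show ?thesis by (simp add: Zn)
qed

abbreviation "\<mu> \<equiv> mu_meas K \<rho>"
abbreviation "\<pi> \<equiv> pi_meas K \<rho>"

lemma mu_eq: "\<mu> = density LL (\<lambda>p. ennreal (indicator KR p / Zr))"
proof -
  have "\<mu> = uniform_measure LL KR" by (simp add: mu_meas_def lborel_prod)
  also have "\<dots> = density LL (\<lambda>p. ennreal (indicator KR p / Zr))"
    unfolding uniform_measure_def emeasure_KR
    using divide_ennreal[of 1 Zr] Zr_pos by (intro density_cong) (auto simp: indicator_def intro!: AE_I2)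
  finally show ?thesis .
qed

lemma sets_mu: "sets \<mu> = sets (borel \<Otimes>\<^sub>M borel)"
  by (simp add: mu_eq sets_pair_measure_cong[OF sets_lborel sets_lborel])

lemma space_mu: "space \<mu> = UNIV"
  by (simp add: mu_eq space_pair_measure)

lemma meas_mu_iff: "f \<in> borel_measurable \<mu> \<longleftrightarrow> f \<in> borel_measurable (borel \<Otimes>\<^sub>M borel)"
  by (simp add: sets_mu cong: measurable_cong_sets)

lemma prob_mu: "prob_space \<mu>"
  unfolding mu_meas_def lborel_prod[symmetric]
  by (rule prob_space_uniform_measure) (use emeasure_KR Zr_pos in auto)

lemma nn_mu: "f \<in> borel_measurable (borel \<Otimes>\<^sub>M borel) \<Longrightarrow>
    (\<integral>\<^sup>+ p. f p \<partial>\<mu>) = (\<integral>\<^sup>+ p. indicator KR p * f p \<partial>LL) / ennreal Zr"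
proof -
  assume f[measurable]: "f \<in> borel_measurable (borel \<Otimes>\<^sub>M borel)"
  have "(\<integral>\<^sup>+ p. f p \<partial>\<mu>) = (\<integral>\<^sup>+ p. ennreal (indicator KR p / Zr) * f p \<partial>LL)"
    unfolding mu_eq by (subst nn_integral_density) (auto intro: LL_meas)
  also have "\<dots> = (\<integral>\<^sup>+ p. (indicator KR p * f p) * (1 / ennreal Zr) \<partial>LL)"
  proof (intro nn_integral_cong)
    fix p
    have e: "ennreal (1 / Zr) = 1 / ennreal Zr" using divide_ennreal[of 1 Zr] Zr_pos by simp
    have "ennreal (indicator KR p / Zr) = indicator KR p * ennreal (1 / Zr)"
      by (auto simp: indicator_def)
    then show "ennreal (indicator KR p / Zr) * f p = (indicator KR p * f p) * (1 / ennreal Zr)"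
      by (simp add: e ac_simps)
  qed
  also have "\<dots> = (\<integral>\<^sup>+ p. indicator KR p * f p \<partial>LL) * (1 / ennreal Zr)"
    by (rule nn_integral_multc) (auto intro: LL_meas)
  finally show ?thesis by (simp add: ennreal_times_divide)
qed

lemma int_mu: "(\<integral> p. f p \<partial>\<mu>) = (\<integral> p. indicator KR p / Zr * f p \<partial>LL)"
  if "f \<in> borel_measurable (borel \<Otimes>\<^sub>M borel)"
  unfolding mu_eq using that Zr_pos
  by (subst integral_density) (auto intro: LL_meas)

lemma AE_mu_KR: "AE p in \<mu>. p \<in> KR"
proof -
  have "(\<integral>\<^sup>+ p. indicator (- KR) p \<partial>\<mu>) = 0"
  proof -
    have "(\<lambda>p. indicator KR p * indicator (- KR) p :: ennreal) = (\<lambda>_. 0)" by (auto simp: indicator_def)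
    then show ?thesis by (subst nn_mu) auto
  qed
  then have "AE p in \<mu>. indicator (- KR) p = (0::ennreal)"
    by (subst (asm) nn_integral_0_iff_AE) (auto simp: meas_mu_iff)
  then show ?thesis by (auto simp: indicator_def)
qed


lemma H'_prob: "p \<in> KR \<Longrightarrow> prob_space (H' (snd p) (fst p))"
  using H_markov by (cases p) (auto simp: Krho_def level_def H'_pos)

lemma H'_L: "p \<in> KR \<Longrightarrow> emeasure (H' (snd p) (fst p)) (L (snd p)) = 1"
  using H_markov by (cases p) (auto simp: Krho_def level_def H'_pos)

lemma Tp_one: "p \<in> KR \<Longrightarrow> Tp (\<lambda>_. 1) p = 1"
  unfolding Tp_def using H'_L[of p] by (simp add: sets_H')

lemma inv:
  assumes G[measurable]: "G \<in> borel_measurable (borel \<Otimes>\<^sub>M borel)"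
  shows "(\<integral>\<^sup>+ p. Tp G p \<partial>\<mu>) = (\<integral>\<^sup>+ p. G p \<partial>\<mu>)"
proof -
  have "(\<integral>\<^sup>+ p. indicator KR p * Tp G p \<partial>LL) = (\<integral>\<^sup>+ p. indicator KR p * (\<lambda>_. 1) p * Tp G p \<partial>LL)" by simp
  also have "\<dots> = (\<integral>\<^sup>+ p. indicator KR p * G p * Tp (\<lambda>_. 1) p \<partial>LL)"
    by (rule NN_sym) auto
  also have "\<dots> = (\<integral>\<^sup>+ p. indicator KR p * G p \<partial>LL)"
    by (intro nn_integral_cong) (auto simp: indicator_def Tp_one)
  finally show ?thesis by (simp add: nn_mu)
qed

definition T :: "('a \<times> real \<Rightarrow> real) \<Rightarrow> 'a \<times> real \<Rightarrow> real" where
  "T F p = indicator KR p * (\<integral> y. indicator (L (snd p)) y * F (y, snd p) \<partial>H' (snd p) (fst p))"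

lemma T_meas[measurable]:
  assumes [measurable]: "F \<in> borel_measurable (borel \<Otimes>\<^sub>M borel)"
  shows "T F \<in> borel_measurable (borel \<Otimes>\<^sub>M borel)"
proof -
  note integral_measurable_subprob_algebra[measurable] measurable_distr2[measurable]
  define g where "g = (\<lambda>(p::'a\<times>real, y::'a). indicator (L (snd p)) y * F (y, snd p))"
  have [measurable]: "g \<in> borel_measurable ((borel \<Otimes>\<^sub>M borel) \<Otimes>\<^sub>M borel)"
    unfolding g_def by measurable
  have "(\<lambda>p. integral\<^sup>L (distr (H' (snd p) (fst p)) ((borel \<Otimes>\<^sub>M borel) \<Otimes>\<^sub>M borel) (\<lambda>y. (p, y))) g)
      \<in> borel_measurable (borel \<Otimes>\<^sub>M borel)"
    by measurable
  moreover have "integral\<^sup>L (distr (H' (snd p) (fst p)) ((borel \<Otimes>\<^sub>M borel) \<Otimes>\<^sub>M borel) (\<lambda>y. (p, y))) g =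
      (\<integral> y. indicator (L (snd p)) y * F (y, snd p) \<partial>H' (snd p) (fst p))" for p
    by (subst integral_distr) (auto simp: g_def sets_H' space_pair_measure intro!: measurable_Pair2' cong: measurable_cong_sets)
  ultimately have "(\<lambda>p. (\<integral> y. indicator (L (snd p)) y * F (y, snd p) \<partial>H' (snd p) (fst p))) \<in> borel_measurable (borel \<Otimes>\<^sub>M borel)"
    by simp
  then show ?thesis unfolding T_def[abs_def] by measurable
qed


lemma L2_mu_meas: "F \<in> L2 \<mu> \<Longrightarrow> F \<in> borel_measurable (borel \<Otimes>\<^sub>M borel)"
  by (simp add: L2_def meas_mu_iff)

lemma L2_mu_iff: "F \<in> L2 \<mu> \<longleftrightarrow> F \<in> borel_measurable (borel \<Otimes>\<^sub>M borel) \<and> (\<integral>\<^sup>+ p. ennreal ((F p)^2) \<partial>\<mu>) < \<infinity>"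
  by (simp add: L2_def meas_mu_iff)

lemma abs_le_1_sq: "\<bar>a::real\<bar> \<le> 1 + a^2"
proof -
  have "0 \<le> (\<bar>a\<bar> - 1)^2" by simp
  then show ?thesis by (simp add: power2_eq_square algebra_simps)
qed

lemma abs_le_1_sq': "ennreal \<bar>a\<bar> \<le> 1 + ennreal (a^2)"
proof -
  have "ennreal \<bar>a\<bar> \<le> ennreal (1 + a^2)" by (rule ennreal_leI, rule abs_le_1_sq)
  also have "\<dots> = 1 + ennreal (a^2)" by (simp add: ennreal_plus)
  finally show ?thesis .
qed

lemma gsq: "ennreal ((indicator A y * f y)^2) = indicator A y * ennreal ((f y)^2)"
  by (auto simp: indicator_def)

lemma T_AE_int:
  assumes F: "F \<in> L2 \<mu>"
  shows "AE p in \<mu>. integrable (H' (snd p) (fst p)) (\<lambda>y. indicator (L (snd p)) y * F (y, snd p))"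
proof -
  have [measurable]: "F \<in> borel_measurable (borel \<Otimes>\<^sub>M borel)" using F by (rule L2_mu_meas)
  define G where "G = (\<lambda>q. ennreal ((F q)^2))"
  have [measurable]: "G \<in> borel_measurable (borel \<Otimes>\<^sub>M borel)" unfolding G_def by measurable
  have "(\<integral>\<^sup>+ p. Tp G p \<partial>\<mu>) = (\<integral>\<^sup>+ p. G p \<partial>\<mu>)" by (rule inv) measurable
  also have "\<dots> < \<infinity>" using F by (simp add: L2_mu_iff G_def)
  finally have "AE p in \<mu>. Tp G p \<noteq> \<infinity>"
    by (intro nn_integral_PInf_AE) (auto simp: meas_mu_iff)
  with AE_mu_KR show ?thesis
  proof eventually_elim
    case (elim p)
    interpret N: prob_space "H' (snd p) (fst p)" using H'_prob[OF elim(1)] .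
    have [measurable]: "(\<lambda>y. indicator (L (snd p)) y * F (y, snd p)) \<in> borel_measurable (H' (snd p) (fst p))"
      by (simp add: sets_H' cong: measurable_cong_sets)
    show ?case
    proof (subst integrable_iff_bounded, intro conjI)
      have "(\<integral>\<^sup>+ y. ennreal (norm (indicator (L (snd p)) y * F (y, snd p))) \<partial>H' (snd p) (fst p))
          \<le> (\<integral>\<^sup>+ y. 1 + ennreal ((indicator (L (snd p)) y * F (y, snd p))^2) \<partial>H' (snd p) (fst p))"
        by (intro nn_integral_mono) (simp only: real_norm_def abs_le_1_sq')
      also have "\<dots> = 1 + Tp G p"
      proof -
        have "(\<integral>\<^sup>+ y. ennreal ((indicator (L (snd p)) y * F (y, snd p))^2) \<partial>H' (snd p) (fst p)) = Tp G p"
          unfolding Tp_def G_def by (rule nn_integral_cong, rule gsq)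
        then show ?thesis by (subst nn_integral_add) (auto simp: N.emeasure_space_1)
      qed
      also have "\<dots> < \<infinity>" using elim(2) by (simp add: less_top)
      finally show "(\<integral>\<^sup>+ y. ennreal (norm (indicator (L (snd p)) y * F (y, snd p))) \<partial>H' (snd p) (fst p)) < \<infinity>" .
    qed measurable
  qed
qed

lemma T_sq:
  assumes F[measurable]: "F \<in> borel_measurable (borel \<Otimes>\<^sub>M borel)"
  shows "ennreal ((T F p)^2) \<le> Tp (\<lambda>q. ennreal ((F q)^2)) p"
proof (cases "p \<in> KR")
  case False then show ?thesis by (simp add: T_def)
next
  case True
  interpret N: prob_space "H' (snd p) (fst p)" using H'_prob[OF True] .
  define g where "g = (\<lambda>y. indicator (L (snd p)) y * F (y, snd p))"
  have [measurable]: "g \<in> borel_measurable (H' (snd p) (fst p))"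
    unfolding g_def by (simp add: sets_H' cong: measurable_cong_sets)
  have Tg: "T F p = (\<integral>y. g y \<partial>H' (snd p) (fst p))" using True by (simp add: T_def g_def)
  have rhs: "Tp (\<lambda>q. ennreal ((F q)^2)) p = (\<integral>\<^sup>+ y. ennreal ((g y)^2) \<partial>H' (snd p) (fst p))"
    unfolding Tp_def g_def by (rule nn_integral_cong, rule gsq[symmetric])
  show ?thesis
  proof (cases "integrable (H' (snd p) (fst p)) g")
    case False then show ?thesis by (simp add: Tg not_integrable_integral_eq)
  next
    case int: True
    have "ennreal ((T F p)^2) = (ennreal \<bar>T F p\<bar>)^2"
      by (subst ennreal_power) auto
    also have "\<dots> \<le> (\<integral>\<^sup>+ y. ennreal \<bar>g y\<bar> \<partial>H' (snd p) (fst p))^2"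
      using integral_norm_bound_ennreal[OF int] unfolding Tg by (intro power_mono) auto
    also have "\<dots> = (\<integral>\<^sup>+ y. ennreal \<bar>g y\<bar> * 1 \<partial>H' (snd p) (fst p))^2" by simp
    also have "\<dots> \<le> (\<integral>\<^sup>+ y. (ennreal \<bar>g y\<bar>)^2 \<partial>H' (snd p) (fst p)) * (\<integral>\<^sup>+ y. 1 ^ 2 \<partial>H' (snd p) (fst p))"
      by (rule Cauchy_Schwarz_nn_integral) measurable
    also have "\<dots> = (\<integral>\<^sup>+ y. ennreal ((g y)^2) \<partial>H' (snd p) (fst p))"
    proof -
      have "(ennreal \<bar>g y\<bar>)^2 = ennreal ((g y)^2)" for y by (subst ennreal_power) auto
      then show ?thesis by (simp add: N.emeasure_space_1)
    qed
    finally show ?thesis by (simp add: rhs)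
  qed
qed

lemma T_L2:
  assumes F: "F \<in> L2 \<mu>"
  shows "T F \<in> L2 \<mu>" and "(\<integral>\<^sup>+ p. ennreal ((T F p)^2) \<partial>\<mu>) \<le> (\<integral>\<^sup>+ p. ennreal ((F p)^2) \<partial>\<mu>)"
proof -
  have [measurable]: "F \<in> borel_measurable (borel \<Otimes>\<^sub>M borel)" using F by (rule L2_mu_meas)
  have "(\<integral>\<^sup>+ p. ennreal ((T F p)^2) \<partial>\<mu>) \<le> (\<integral>\<^sup>+ p. Tp (\<lambda>q. ennreal ((F q)^2)) p \<partial>\<mu>)"
    by (intro nn_integral_mono T_sq) measurable
  also have "\<dots> = (\<integral>\<^sup>+ p. ennreal ((F p)^2) \<partial>\<mu>)" by (rule inv) measurable
  finally show le: "(\<integral>\<^sup>+ p. ennreal ((T F p)^2) \<partial>\<mu>) \<le> (\<integral>\<^sup>+ p. ennreal ((F p)^2) \<partial>\<mu>)" .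
  show "T F \<in> L2 \<mu>"
    using le F by (auto simp: L2_mu_iff)
qed

lemma T_lin:
  assumes F: "F \<in> L2 \<mu>" and G: "G \<in> L2 \<mu>"
  shows "AE p in \<mu>. T (\<lambda>q. F q + c * G q) p = T F p + c * T G p"
  using T_AE_int[OF F] T_AE_int[OF G]
proof eventually_elim
  case (elim p)
  have "(\<integral> y. indicator (L (snd p)) y * (F (y, snd p) + c * G (y, snd p)) \<partial>H' (snd p) (fst p)) =
     (\<integral> y. indicator (L (snd p)) y * F (y, snd p) + c * (indicator (L (snd p)) y * G (y, snd p)) \<partial>H' (snd p) (fst p))"
    by (simp add: algebra_simps)
  also have "\<dots> = (\<integral> y. indicator (L (snd p)) y * F (y, snd p) \<partial>H' (snd p) (fst p)) +
      c * (\<integral> y. indicator (L (snd p)) y * G (y, snd p) \<partial>H' (snd p) (fst p))"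
    using elim by simp
  finally show ?case by (simp add: T_def algebra_simps)
qed

lemma T_KR: "T (indicator KR) p = indicator KR p"
proof (cases "p \<in> KR")
  case False then show ?thesis by (simp add: T_def)
next
  case True
  interpret N: prob_space "H' (snd p) (fst p)" using H'_prob[OF True] .
  from True have s: "0 \<le> snd p" by (auto simp: Krho_def)
  have "(\<integral> y. indicator (L (snd p)) y * indicator KR (y, snd p) \<partial>H' (snd p) (fst p)) =
      (\<integral> y. indicator (L (snd p)) y \<partial>H' (snd p) (fst p) :: real)"
  proof -
    have "indicator (L (snd p)) y * indicator KR (y, snd p) = (indicator (L (snd p)) y :: real)" for y
      using s by (auto simp: Krho_def level_def indicator_def)
    then have eq: "(\<lambda>y. indicator (L (snd p)) y * indicator KR (y, snd p)) = (indicator (L (snd p)) :: _ \<Rightarrow> real)"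
      by (intro ext)
    show ?thesis unfolding eq ..
  qed
  also have "\<dots> = measure (H' (snd p) (fst p)) (L (snd p))"
    by (simp add: sets_H')
  also have "\<dots> = 1" using H'_L[OF True] by (simp add: measure_def)
  finally show ?thesis using True by (simp add: T_def)
qed

lemma T_zero: "p \<notin> KR \<Longrightarrow> T F p = 0"
  by (simp add: T_def)


lemma T_nonneg: "(\<And>q. 0 \<le> F q) \<Longrightarrow> 0 \<le> T F p"
  unfolding T_def by (auto intro!: mult_nonneg_nonneg integral_nonneg_AE AE_I2)

lemma T_ennreal:
  assumes F: "F \<in> L2 \<mu>" and nn: "\<And>q. 0 \<le> F q"
  shows "AE p in \<mu>. ennreal (T F p) = Tp (\<lambda>q. ennreal (F q)) p"
  using T_AE_int[OF F] AE_mu_KR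
proof eventually_elim
  case (elim p)
  have "ennreal (T F p) = ennreal (\<integral> y. indicator (L (snd p)) y * F (y, snd p) \<partial>H' (snd p) (fst p))"
    using elim(2) by (simp add: T_def)
  also have "\<dots> = (\<integral>\<^sup>+ y. ennreal (indicator (L (snd p)) y * F (y, snd p)) \<partial>H' (snd p) (fst p))"
    using elim(1) nn by (intro nn_integral_eq_integral[symmetric]) auto
  also have "\<dots> = Tp (\<lambda>q. ennreal (F q)) p"
    unfolding Tp_def by (intro nn_integral_cong) (auto simp: indicator_def)
  finally show ?case .
qed

lemma L2_mu_int: "F \<in> L2 \<mu> \<Longrightarrow> G \<in> L2 \<mu> \<Longrightarrow> integrable \<mu> (\<lambda>p. F p * G p)"
  by (rule L2_mult)

lemma T_sym_nonneg:
  assumes F: "F \<in> L2 \<mu>" and G: "G \<in> L2 \<mu>" and Fn: "\<And>q. 0 \<le> F q" and Gn: "\<And>q. 0 \<le> G q"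
  shows "(\<integral> p. T F p * G p \<partial>\<mu>) = (\<integral> p. F p * T G p \<partial>\<mu>)"
proof -
  have [measurable]: "F \<in> borel_measurable (borel \<Otimes>\<^sub>M borel)" "G \<in> borel_measurable (borel \<Otimes>\<^sub>M borel)"
    using F G by (auto intro: L2_mu_meas)
  have key: "(\<integral> p. T F p * G p \<partial>\<mu>) = enn2real ((\<integral>\<^sup>+ p. indicator KR p * (\<lambda>q. ennreal (G q)) p * Tp (\<lambda>q. ennreal (F q)) p \<partial>LL) / ennreal Zr)"
    if F: "F \<in> L2 \<mu>" and G: "G \<in> L2 \<mu>" and Fn: "\<And>q. 0 \<le> F q" and Gn: "\<And>q. 0 \<le> G q" for F G
  proof -
    have [measurable]: "F \<in> borel_measurable (borel \<Otimes>\<^sub>M borel)" "G \<in> borel_measurable (borel \<Otimes>\<^sub>M borel)"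
      using F G by (auto intro: L2_mu_meas)
    have "(\<integral> p. T F p * G p \<partial>\<mu>) = enn2real (\<integral>\<^sup>+ p. ennreal (T F p * G p) \<partial>\<mu>)"
      using Fn Gn by (intro integral_eq_nn_integral) (auto simp: meas_mu_iff intro!: T_nonneg AE_I2 mult_nonneg_nonneg)
    also have "(\<integral>\<^sup>+ p. ennreal (T F p * G p) \<partial>\<mu>) = (\<integral>\<^sup>+ p. ennreal (G p) * Tp (\<lambda>q. ennreal (F q)) p \<partial>\<mu>)"
      using T_ennreal[OF F Fn]
    proof (intro nn_integral_cong_AE, eventually_elim)
      case (elim p)
      then show ?case using Fn Gn by (simp add: ennreal_mult' T_nonneg mult.commute)
    qed
    also have "\<dots> = (\<integral>\<^sup>+ p. indicator KR p * (\<lambda>q. ennreal (G q)) p * Tp (\<lambda>q. ennreal (F q)) p \<partial>LL) / ennreal Zr"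
      by (subst nn_mu) (auto simp: ac_simps)
    finally show ?thesis .
  qed
  show ?thesis
    using key[OF F G Fn Gn] key[OF G F Gn Fn] NN_sym[of "\<lambda>q. ennreal (G q)" "\<lambda>q. ennreal (F q)"]
    by (simp add: mult.commute)
qed


lemma L2_pos: assumes "F \<in> L2 M" shows "(\<lambda>x. max (F x) 0) \<in> L2 M"
proof -
  have [measurable]: "F \<in> borel_measurable M" using assms by (rule L2_meas)
  have "(\<integral>\<^sup>+ x. ennreal ((max (F x) 0)^2) \<partial>M) \<le> (\<integral>\<^sup>+ x. ennreal ((F x)^2) \<partial>M)"
    by (intro nn_integral_mono ennreal_leI) (auto simp: max_def)
  then show ?thesis using assms unfolding L2_def by auto
qed

lemma L2_neg: assumes "F \<in> L2 M" shows "(\<lambda>x. max (- F x) 0) \<in> L2 M"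
proof -
  have "(\<lambda>x. - F x) \<in> L2 M" using L2_cmult[OF assms, of "-1"] by simp
  from L2_pos[OF this] show ?thesis .
qed

lemma pos_neg: "max (f::real) 0 + (-1) * max (- f) 0 = f"
  by (auto simp: max_def)

lemma T_split:
  assumes G: "G \<in> L2 \<mu>"
  shows "AE p in \<mu>. T G p = T (\<lambda>q. max (G q) 0) p - T (\<lambda>q. max (- G q) 0) p"
proof -
  have e: "(\<lambda>q. max (G q) 0 + (-1) * max (- G q) 0) = G" by (rule ext) (auto simp: max_def)
  show ?thesis using T_lin[OF L2_pos[OF G] L2_neg[OF G], of "-1"] unfolding e by simp
qed

lemma int_cong_mu:
  assumes "AE p in \<mu>. f p = g p" "f \<in> borel_measurable (borel \<Otimes>\<^sub>M borel)" "g \<in> borel_measurable (borel \<Otimes>\<^sub>M borel)"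
  shows "(\<integral> p. f p \<partial>\<mu>) = (\<integral> p. g p \<partial>\<mu>)"
  using assms by (intro integral_cong_AE) (auto simp: meas_mu_iff)

lemma T_sym1:
  assumes F: "F \<in> L2 \<mu>" and G: "G \<in> L2 \<mu>" and Fn: "\<And>q. 0 \<le> F q"
  shows "(\<integral> p. T F p * G p \<partial>\<mu>) = (\<integral> p. F p * T G p \<partial>\<mu>)"
proof -
  define Gp where "Gp = (\<lambda>q. max (G q) 0)"
  define Gn where "Gn = (\<lambda>q. max (- G q) 0)"
  have Gp: "Gp \<in> L2 \<mu>" and Gn: "Gn \<in> L2 \<mu>" using L2_pos[OF G] L2_neg[OF G] by (simp_all add: Gp_def Gn_def)
  have [measurable]: "F \<in> borel_measurable (borel \<Otimes>\<^sub>M borel)" "Gp \<in> borel_measurable (borel \<Otimes>\<^sub>M borel)"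
    "Gn \<in> borel_measurable (borel \<Otimes>\<^sub>M borel)" "G \<in> borel_measurable (borel \<Otimes>\<^sub>M borel)"
    using F Gp Gn G by (auto intro: L2_mu_meas)
  have TF: "T F \<in> L2 \<mu>" using T_L2[OF F] by simp
  have "(\<integral> p. T F p * G p \<partial>\<mu>) = (\<integral> p. T F p * Gp p - T F p * Gn p \<partial>\<mu>)"
    by (intro Bochner_Integration.integral_cong) (auto simp: Gp_def Gn_def max_def algebra_simps)
  also have "\<dots> = (\<integral> p. T F p * Gp p \<partial>\<mu>) - (\<integral> p. T F p * Gn p \<partial>\<mu>)"
    using L2_mult[OF TF Gp] L2_mult[OF TF Gn] by simp
  also have "\<dots> = (\<integral> p. F p * T Gp p \<partial>\<mu>) - (\<integral> p. F p * T Gn p \<partial>\<mu>)"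
    using T_sym_nonneg[OF F Gp Fn] T_sym_nonneg[OF F Gn Fn] by (simp add: Gp_def Gn_def)
  also have "\<dots> = (\<integral> p. F p * T Gp p - F p * T Gn p \<partial>\<mu>)"
    using L2_mult[OF F T_L2(1)[OF Gp]] L2_mult[OF F T_L2(1)[OF Gn]] by simp
  also have "\<dots> = (\<integral> p. F p * T G p \<partial>\<mu>)"
  proof (intro int_cong_mu)
    show "AE p in \<mu>. F p * T Gp p - F p * T Gn p = F p * T G p"
      using T_split[OF G] by eventually_elim (simp add: Gp_def Gn_def right_diff_distrib)
  qed auto
  finally show ?thesis .
qed

lemma T_sym:
  assumes F: "F \<in> L2 \<mu>" and G: "G \<in> L2 \<mu>"
  shows "(\<integral> p. T F p * G p \<partial>\<mu>) = (\<integral> p. F p * T G p \<partial>\<mu>)"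
proof -
  define Fp where "Fp = (\<lambda>q. max (F q) 0)"
  define Fn where "Fn = (\<lambda>q. max (- F q) 0)"
  have Fp: "Fp \<in> L2 \<mu>" and Fn: "Fn \<in> L2 \<mu>" using L2_pos[OF F] L2_neg[OF F] by (simp_all add: Fp_def Fn_def)
  have [measurable]: "F \<in> borel_measurable (borel \<Otimes>\<^sub>M borel)" "Fp \<in> borel_measurable (borel \<Otimes>\<^sub>M borel)"
    "Fn \<in> borel_measurable (borel \<Otimes>\<^sub>M borel)" "G \<in> borel_measurable (borel \<Otimes>\<^sub>M borel)"
    using F Fp Fn G by (auto intro: L2_mu_meas)
  have TG: "T G \<in> L2 \<mu>" using T_L2[OF G] by simp
  have "(\<integral> p. T F p * G p \<partial>\<mu>) = (\<integral> p. T Fp p * G p - T Fn p * G p \<partial>\<mu>)"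
  proof (intro int_cong_mu)
    show "AE p in \<mu>. T F p * G p = T Fp p * G p - T Fn p * G p"
      using T_split[OF F] by eventually_elim (simp add: Fp_def Fn_def left_diff_distrib)
  qed auto
  also have "\<dots> = (\<integral> p. T Fp p * G p \<partial>\<mu>) - (\<integral> p. T Fn p * G p \<partial>\<mu>)"
    using L2_mult[OF T_L2(1)[OF Fp] G] L2_mult[OF T_L2(1)[OF Fn] G] by simp
  also have "\<dots> = (\<integral> p. Fp p * T G p \<partial>\<mu>) - (\<integral> p. Fn p * T G p \<partial>\<mu>)"
    using T_sym1[OF Fp G] T_sym1[OF Fn G] by (simp add: Fp_def Fn_def)
  also have "\<dots> = (\<integral> p. Fp p * T G p - Fn p * T G p \<partial>\<mu>)"
    using L2_mult[OF Fp TG] L2_mult[OF Fn TG] by simp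
  also have "\<dots> = (\<integral> p. F p * T G p \<partial>\<mu>)"
    by (intro Bochner_Integration.integral_cong) (auto simp: Fp_def Fn_def max_def algebra_simps)
  finally show ?thesis .
qed

end



context slice begin

lemma ind_rho_nn: "0 \<le> indicator K x * \<rho> x"
  using rho_nonneg by (auto simp: indicator_def)

lemma pi_eq: "\<pi> = density lborel (\<lambda>x. ennreal (indicator K x * \<rho> x / Zr))"
  unfolding pi_meas_def Zn
  by (intro density_cong) (auto intro!: AE_I2 simp: divide_ennreal Zr_pos ind_rho_nn)

lemma sets_pi: "sets \<pi> = sets borel" by (simp add: pi_eq)
lemma space_pi: "space \<pi> = UNIV" by (simp add: pi_eq)
lemma meas_pi_iff: "f \<in> borel_measurable \<pi> \<longleftrightarrow> f \<in> borel_measurable borel"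
  by (simp add: sets_pi cong: measurable_cong_sets)

lemma nn_pi: "f \<in> borel_measurable borel \<Longrightarrow>
    (\<integral>\<^sup>+ x. f x \<partial>\<pi>) = (\<integral>\<^sup>+ x. ennreal (indicator K x * \<rho> x) * f x \<partial>lborel) / ennreal Zr"
proof -
  assume f[measurable]: "f \<in> borel_measurable borel"
  have "(\<integral>\<^sup>+ x. f x \<partial>\<pi>) = (\<integral>\<^sup>+ x. ennreal (indicator K x * \<rho> x / Zr) * f x \<partial>lborel)"
    unfolding pi_eq by (subst nn_integral_density) auto
  also have "\<dots> = (\<integral>\<^sup>+ x. (ennreal (indicator K x * \<rho> x) * f x) * (1 / ennreal Zr) \<partial>lborel)"
  proof (intro nn_integral_cong)
    fix x
    have e1: "ennreal (1 / Zr) = 1 / ennreal Zr" using divide_ennreal[of 1 Zr] Zr_pos by simp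
    have e: "ennreal (indicator K x * \<rho> x / Zr) = ennreal (indicator K x * \<rho> x) * (1 / ennreal Zr)"
      using ind_rho_nn[of x] Zr_pos by (simp add: ennreal_mult[symmetric] e1[symmetric])
    show "ennreal (indicator K x * \<rho> x / Zr) * f x = (ennreal (indicator K x * \<rho> x) * f x) * (1 / ennreal Zr)"
      by (subst e) (simp add: ac_simps)
  qed
  also have "\<dots> = (\<integral>\<^sup>+ x. ennreal (indicator K x * \<rho> x) * f x \<partial>lborel) * (1 / ennreal Zr)"
    by (rule nn_integral_multc) auto
  finally show ?thesis by (simp add: ennreal_times_divide)
qed

lemma int_pi: "f \<in> borel_measurable borel \<Longrightarrow> (\<integral> x. f x \<partial>\<pi>) = (\<integral> x. indicator K x * \<rho> x / Zr * f x \<partial>lborel)"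
  unfolding pi_eq using ind_rho_nn Zr_pos by (subst integral_density) auto

lemma mu_fst_nn:
  assumes h[measurable]: "h \<in> borel_measurable borel"
  shows "(\<integral>\<^sup>+ p. h (fst p) \<partial>\<mu>) = (\<integral>\<^sup>+ x. h x \<partial>\<pi>)"
proof -
  have "(\<integral>\<^sup>+ p. indicator KR p * h (fst p) \<partial>LL) = (\<integral>\<^sup>+ x. \<integral>\<^sup>+ t. indicator KR (x, t) * h x \<partial>lborel \<partial>lborel)"
    by (subst lborel.nn_integral_fst[symmetric]) (auto intro!: LL_meas)
  also have "\<dots> = (\<integral>\<^sup>+ x. ennreal (indicator K x * \<rho> x) * h x \<partial>lborel)"
  proof (intro nn_integral_cong)
    fix x
    show "(\<integral>\<^sup>+ t. indicator KR (x, t) * h x \<partial>lborel) = ennreal (indicator K x * \<rho> x) * h x"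
    proof (cases "x \<in> K")
      case True
      then have "(\<lambda>t. indicator KR (x, t) * h x) = (\<lambda>t. h x * indicator {0..\<rho> x} t)"
        by (auto simp: Krho_def indicator_def)
      then show ?thesis using True rho_nonneg by (simp add: nn_integral_cmult_indicator mult.commute)
    next
      case False then show ?thesis by (simp add: Krho_def indicator_def)
    qed
  qed
  finally show ?thesis by (simp add: nn_mu nn_pi)
qed

lemma distr_fst: "distr \<mu> borel fst = \<pi>"
proof (rule measure_eqI)
  show "sets (distr \<mu> borel fst) = sets \<pi>" by (simp add: sets_pi)
  fix A assume "A \<in> sets (distr \<mu> borel fst)"
  then have A[measurable]: "A \<in> sets borel" by simp
  have fm: "fst \<in> \<mu> \<rightarrow>\<^sub>M borel" by (simp add: meas_mu_iff)
  have "emeasure (distr \<mu> borel fst) A = (\<integral>\<^sup>+ x. indicator A x \<partial>distr \<mu> borel fst)" by simp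
  also have "\<dots> = (\<integral>\<^sup>+ p. indicator A (fst p) \<partial>\<mu>)" by (subst nn_integral_distr[OF fm]) auto
  also have "\<dots> = (\<integral>\<^sup>+ x. indicator A x \<partial>\<pi>)" by (rule mu_fst_nn) auto
  also have "\<dots> = emeasure \<pi> A" by (simp add: sets_pi)
  finally show "emeasure (distr \<mu> borel fst) A = emeasure \<pi> A" .
qed

lemma prob_pi: "prob_space \<pi>"
proof -
  interpret prob_space \<mu> by (rule prob_mu)
  have "prob_space (distr \<mu> borel fst)" by (rule prob_space_distr) (simp add: meas_mu_iff)
  then show ?thesis by (simp add: distr_fst)
qed

lemma mu_fst_int:
  fixes h :: "'a \<Rightarrow> real"
  assumes h[measurable]: "h \<in> borel_measurable borel"
  shows "(\<integral> p. h (fst p) \<partial>\<mu>) = (\<integral> x. h x \<partial>\<pi>)"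
proof -
  have fm: "fst \<in> \<mu> \<rightarrow>\<^sub>M borel" by (simp add: meas_mu_iff)
  have "(\<integral> x. h x \<partial>\<pi>) = (\<integral> x. h x \<partial>distr \<mu> borel fst)" by (simp add: distr_fst)
  also have "\<dots> = (\<integral> p. h (fst p) \<partial>\<mu>)" by (rule integral_distr[OF fm h])
  finally show ?thesis by simp
qed

definition U :: "('a \<Rightarrow> real) \<Rightarrow> 'a \<times> real \<Rightarrow> real" where
  "U f p = indicator KR p * f (fst p)"

lemma U_meas[measurable]: "f \<in> borel_measurable borel \<Longrightarrow> U f \<in> borel_measurable (borel \<Otimes>\<^sub>M borel)"
proof -
  assume [measurable]: "f \<in> borel_measurable borel"
  show ?thesis unfolding U_def[abs_def] by measurable
qed

lemma U_AE: "AE p in \<mu>. U f p = f (fst p)"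
  using AE_mu_KR by eventually_elim (simp add: U_def)

lemma L2_pi_meas: "f \<in> L2 \<pi> \<Longrightarrow> f \<in> borel_measurable borel"
  by (simp add: L2_def meas_pi_iff)

lemma U_L2: assumes f: "f \<in> L2 \<pi>" shows "U f \<in> L2 \<mu>"
proof -
  have [measurable]: "f \<in> borel_measurable borel" using f by (rule L2_pi_meas)
  have "(\<integral>\<^sup>+ p. ennreal ((U f p)^2) \<partial>\<mu>) = (\<integral>\<^sup>+ p. ennreal ((f (fst p))^2) \<partial>\<mu>)"
    using U_AE[of f] by (intro nn_integral_cong_AE) (auto elim!: eventually_mono)
  also have "\<dots> = (\<integral>\<^sup>+ x. ennreal ((f x)^2) \<partial>\<pi>)" by (rule mu_fst_nn) measurable
  also have "\<dots> < \<infinity>" using f by (simp add: L2_def)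
  finally show ?thesis by (simp add: L2_mu_iff)
qed

lemma U_inner: assumes f: "f \<in> L2 \<pi>" and h: "h \<in> L2 \<pi>"
  shows "(\<integral> p. U f p * U h p \<partial>\<mu>) = (\<integral> x. f x * h x \<partial>\<pi>)"
proof -
  have [measurable]: "f \<in> borel_measurable borel" "h \<in> borel_measurable borel" using f h by (auto intro: L2_pi_meas)
  have "(\<integral> p. U f p * U h p \<partial>\<mu>) = (\<integral> p. f (fst p) * h (fst p) \<partial>\<mu>)"
  proof (intro int_cong_mu)
    show "AE p in \<mu>. U f p * U h p = f (fst p) * h (fst p)"
      using U_AE[of f] U_AE[of h] by eventually_elim simp
  qed auto
  also have "\<dots> = (\<integral> x. f x * h x \<partial>\<pi>)" by (rule mu_fst_int) measurable
  finally show ?thesis .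
qed

lemma U_int: assumes f: "f \<in> borel_measurable borel"
  shows "(\<integral> p. U f p \<partial>\<mu>) = (\<integral> x. f x \<partial>\<pi>)"
proof -
  have [measurable]: "f \<in> borel_measurable borel" using f .
  have "(\<integral> p. U f p \<partial>\<mu>) = (\<integral> p. f (fst p) \<partial>\<mu>)"
    using U_AE[of f] by (intro int_cong_mu) auto
  also have "\<dots> = (\<integral> x. f x \<partial>\<pi>)" by (rule mu_fst_int) measurable
  finally show ?thesis .
qed

lemma U_one: "U (\<lambda>_. 1) = indicator KR"
  by (simp add: U_def[abs_def])


definition avg :: "('a \<times> real \<Rightarrow> real) \<Rightarrow> 'a \<Rightarrow> real" where
  "avg G x = (LINT t:{0..\<rho> x}|lborel. G (x, t)) / \<rho> x"

lemma avg_alt: "avg G x = (\<integral> t. indicator {0..\<rho> x} t * G (x, t) \<partial>lborel) / \<rho> x"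
  by (simp add: avg_def set_lebesgue_integral_def)

lemma avg_meas[measurable]:
  assumes G[measurable]: "G \<in> borel_measurable (borel \<Otimes>\<^sub>M borel)"
  shows "avg G \<in> borel_measurable borel"
proof -
  have "(\<lambda>(x, t). indicator {0..\<rho> x} t * G (x, t)) \<in> borel_measurable (borel \<Otimes>\<^sub>M borel)"
  proof -
    have "(\<lambda>(x, t). indicator {0..\<rho> x} t * G (x, t)) = (\<lambda>p. (if 0 \<le> snd p \<and> snd p \<le> \<rho> (fst p) then 1 else 0) * G p)"
      by (auto simp: indicator_def)
    also have "\<dots> \<in> borel_measurable (borel \<Otimes>\<^sub>M borel)" by measurable
    finally show ?thesis .
  qed
  then have "(\<lambda>(x, t). indicator {0..\<rho> x} t * G (x, t)) \<in> borel_measurable (borel \<Otimes>\<^sub>M lborel)"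
    by (simp cong: measurable_cong_sets add: sets_pair_measure_cong[OF refl sets_lborel])
  then have "(\<lambda>x. \<integral> t. indicator {0..\<rho> x} t * G (x, t) \<partial>lborel) \<in> borel_measurable borel"
    by (rule lborel.borel_measurable_lebesgue_integral)
  then show ?thesis unfolding avg_alt[abs_def] by measurable
qed

lemma int_point0: "(\<integral> t. indicator {0..0::real} t * g t \<partial>lborel) = (0::real)"
proof -
  have "(\<lambda>t. indicator {0..0::real} t * g t) = (\<lambda>t. g 0 * indicator {0} t)"
    by (auto simp: indicator_def)
  then show ?thesis by simp
qed

lemma avg_pt:
  assumes G[measurable]: "G \<in> borel_measurable (borel \<Otimes>\<^sub>M borel)"
  shows "ennreal (indicator K x * \<rho> x) * ennreal ((avg G x)^2) \<le> (\<integral>\<^sup>+ t. indicator KR (x, t) * ennreal ((G (x, t))^2) \<partial>lborel)"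
proof (cases "x \<in> K \<and> 0 < \<rho> x")
  case False
  then have "indicator K x * \<rho> x = 0" using rho_nonneg by (auto simp: indicator_def)
  then have "ennreal (indicator K x * \<rho> x) = 0" by (simp only: ennreal_0)
  then show ?thesis by simp
next
  case True
  define r where "r = \<rho> x"
  have r: "0 < r" using True by (simp add: r_def)
  define I where "I = {0..r}"
  have [measurable]: "I \<in> sets borel" by (simp add: I_def)
  have gm[measurable]: "(\<lambda>t. G (x, t)) \<in> borel_measurable borel" by measurable
  have indKR: "indicator KR (x, t) = (indicator I t :: 'b::zero_neq_one)" for t
    using True by (auto simp: Krho_def I_def r_def indicator_def)
  define Lx where "Lx = (\<integral> t. indicator I t * G (x, t) \<partial>lborel)"
  define J where "J = (\<integral>\<^sup>+ t. indicator I t * ennreal ((G (x, t))^2) \<partial>lborel)"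
  have avgx: "avg G x = Lx / r" by (simp add: avg_alt Lx_def I_def r_def)
  have rhs: "(\<integral>\<^sup>+ t. indicator KR (x, t) * ennreal ((G (x, t))^2) \<partial>lborel) = J"
    by (simp add: J_def indKR)
  have main: "ennreal (Lx^2) \<le> ennreal r * J"
  proof (cases "integrable lborel (\<lambda>t. indicator I t * G (x, t))")
    case False then show ?thesis by (simp add: Lx_def not_integrable_integral_eq)
  next
    case int: True
    have "ennreal (Lx^2) = (ennreal \<bar>Lx\<bar>)^2" by (subst ennreal_power) auto
    also have "\<dots> \<le> (\<integral>\<^sup>+ t. ennreal \<bar>indicator I t * G (x, t)\<bar> \<partial>lborel)^2"
      using integral_norm_bound_ennreal[OF int] unfolding Lx_def by (intro power_mono) auto
    also have "\<dots> = (\<integral>\<^sup>+ t. ennreal \<bar>indicator I t * G (x, t)\<bar> * indicator I t \<partial>lborel)^2"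
      by (intro arg_cong[where f="\<lambda>a. a^2"] nn_integral_cong) (auto simp: indicator_def)
    also have "\<dots> \<le> (\<integral>\<^sup>+ t. (ennreal \<bar>indicator I t * G (x, t)\<bar>)^2 \<partial>lborel) * (\<integral>\<^sup>+ t. (indicator I t)^2 \<partial>lborel)"
      by (rule Cauchy_Schwarz_nn_integral) measurable
    also have "(\<integral>\<^sup>+ t. (ennreal \<bar>indicator I t * G (x, t)\<bar>)^2 \<partial>lborel) = J"
      unfolding J_def by (intro nn_integral_cong) (auto simp: indicator_def ennreal_power)
    also have "(\<integral>\<^sup>+ t. (indicator I t :: ennreal)^2 \<partial>lborel) = ennreal r"
    proof -
      have "(\<lambda>t. (indicator I t :: ennreal)^2) = indicator I" by (auto simp: indicator_def)
      then show ?thesis using r by (simp add: I_def)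
    qed
    finally show ?thesis by (simp add: mult.commute)
  qed
  have "ennreal (indicator K x * \<rho> x) * ennreal ((avg G x)^2) = ennreal (Lx^2 / r)"
    using True r by (simp add: avgx r_def ennreal_mult[symmetric] power2_eq_square)
  also have "\<dots> \<le> J"
  proof (cases "J = \<infinity>")
    case True then show ?thesis by simp
  next
    case False
    then obtain j where j: "J = ennreal j" "0 \<le> j" by (cases J) auto
    have "Lx^2 \<le> r * j" using main j r by (simp add: ennreal_mult[symmetric])
    then have "Lx^2 / r \<le> j" using r by (simp add: field_simps)
    then show ?thesis using j by (simp add: ennreal_leI)
  qed
  finally show ?thesis by (simp add: rhs)
qed

lemma avg_L2:
  assumes G: "G \<in> L2 \<mu>"
  shows "avg G \<in> L2 \<pi>" "(\<integral>\<^sup>+ x. ennreal ((avg G x)^2) \<partial>\<pi>) \<le> (\<integral>\<^sup>+ p. ennreal ((G p)^2) \<partial>\<mu>)"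
proof -
  have [measurable]: "G \<in> borel_measurable (borel \<Otimes>\<^sub>M borel)" using G by (rule L2_mu_meas)
  have "(\<integral>\<^sup>+ x. ennreal ((avg G x)^2) \<partial>\<pi>) = (\<integral>\<^sup>+ x. ennreal (indicator K x * \<rho> x) * ennreal ((avg G x)^2) \<partial>lborel) / ennreal Zr"
    by (rule nn_pi) measurable
  also have "\<dots> \<le> (\<integral>\<^sup>+ x. \<integral>\<^sup>+ t. indicator KR (x, t) * ennreal ((G (x, t))^2) \<partial>lborel \<partial>lborel) / ennreal Zr"
    by (intro divide_right_mono_ennreal nn_integral_mono avg_pt) measurable
  also have "(\<integral>\<^sup>+ x. \<integral>\<^sup>+ t. indicator KR (x, t) * ennreal ((G (x, t))^2) \<partial>lborel \<partial>lborel)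
      = (\<integral>\<^sup>+ p. indicator KR p * ennreal ((G p)^2) \<partial>LL)"
    by (subst lborel.nn_integral_fst[symmetric]) (auto intro!: LL_meas)
  also have "\<dots> / ennreal Zr = (\<integral>\<^sup>+ p. ennreal ((G p)^2) \<partial>\<mu>)"
    by (subst nn_mu) auto
  finally show le: "(\<integral>\<^sup>+ x. ennreal ((avg G x)^2) \<partial>\<pi>) \<le> (\<integral>\<^sup>+ p. ennreal ((G p)^2) \<partial>\<mu>)" .
  show "avg G \<in> L2 \<pi>"
    using le G unfolding L2_def by (auto simp: meas_pi_iff L2_mu_iff)
qed


lemma avg_inner:
  assumes G: "G \<in> L2 \<mu>" and h: "h \<in> L2 \<pi>"
  shows "(\<integral> x. avg G x * h x \<partial>\<pi>) = (\<integral> p. G p * U h p \<partial>\<mu>)"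
proof -
  have [measurable]: "G \<in> borel_measurable (borel \<Otimes>\<^sub>M borel)" "h \<in> borel_measurable borel"
    using G h by (auto intro: L2_mu_meas L2_pi_meas)
  have int: "integrable \<mu> (\<lambda>p. G p * U h p)" using L2_mult[OF G U_L2[OF h]] .
  have intLL: "integrable LL (\<lambda>p. indicator KR p / Zr * (G p * U h p))"
    using int unfolding mu_eq using Zr_pos
    by (subst (asm) integrable_density) (auto intro: LL_meas)
  have "(\<integral> p. G p * U h p \<partial>\<mu>) = (\<integral> p. indicator KR p / Zr * (G p * U h p) \<partial>LL)"
    by (rule int_mu) measurable
  also have "\<dots> = (\<integral> x. \<integral> t. indicator KR (x, t) / Zr * (G (x, t) * U h (x, t)) \<partial>lborel \<partial>lborel)"
    using lborel_pair.integral_fst'[OF intLL] by (simp only:)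
  also have "\<dots> = (\<integral> x. indicator K x * \<rho> x / Zr * (avg G x * h x) \<partial>lborel)"
  proof (intro Bochner_Integration.integral_cong refl)
    fix x
    have "(\<integral> t. indicator KR (x, t) / Zr * (G (x, t) * U h (x, t)) \<partial>lborel) =
        (\<integral> t. (indicator K x * h x / Zr) * (indicator {0..\<rho> x} t * G (x, t)) \<partial>lborel)"
      by (intro Bochner_Integration.integral_cong) (auto simp: U_def Krho_def indicator_def)
    also have "\<dots> = (indicator K x * h x / Zr) * (\<integral> t. indicator {0..\<rho> x} t * G (x, t) \<partial>lborel)"
      by simp
    also have "\<dots> = indicator K x * \<rho> x / Zr * (avg G x * h x)"
    proof (cases "x \<in> K")
      case False then show ?thesis by simp
    next
      case True
      show ?thesis
      proof (cases "\<rho> x = 0")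
        case True then show ?thesis using int_point0[of "\<lambda>t. G (x, t)"] by simp
      next
        case False then show ?thesis by (simp add: avg_alt)
      qed
    qed
    finally show "(\<integral> t. indicator KR (x, t) / Zr * (G (x, t) * U h (x, t)) \<partial>lborel) =
        indicator K x * \<rho> x / Zr * (avg G x * h x)" .
  qed
  also have "\<dots> = (\<integral> x. avg G x * h x \<partial>\<pi>)"
    by (rule int_pi[symmetric]) measurable
  finally show ?thesis ..
qed

lemma kpow_meas:
  assumes t: "0 \<le> t" and f[measurable]: "f \<in> borel_measurable borel"
  shows "kpow H t j f \<in> borel_measurable borel"
proof (induction j)
  case 0 then show ?case by simp
next
  case (Suc j)
  have "(\<lambda>M. integral\<^sup>L M (kpow H t j f)) \<in> subprob_algebra borel \<rightarrow>\<^sub>M borel"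
    by (rule integral_measurable_subprob_algebra[OF Suc.IH])
  from measurable_comp[OF H'_kernel[of t] this] show ?case
    using t by (simp add: comp_def H'_pos)
qed

lemma kpow_T:
  assumes f[measurable]: "f \<in> borel_measurable borel"
  shows "(x, t) \<in> KR \<Longrightarrow> kpow H t j f x = (T ^^ j) (U f) (x, t)"
proof (induction j arbitrary: x)
  case 0 then show ?case by (simp add: U_def)
next
  case (Suc j)
  have t: "0 \<le> t" and xL: "x \<in> L t" using Suc.prems by (auto simp: Krho_def level_def)
  interpret N: prob_space "H t x" using H_markov t xL by auto
  have sN: "sets (H t x) = sets borel" using H_markov t xL by auto
  have "(T ^^ Suc j) (U f) (x, t) = (\<integral> y. indicator (L t) y * (T ^^ j) (U f) (y, t) \<partial>H t x)"
    using Suc.prems t by (simp add: T_def H'_pos)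
  also have "\<dots> = (\<integral> y. indicator (L t) y * kpow H t j f y \<partial>H t x)"
  proof (intro Bochner_Integration.integral_cong refl)
    fix y show "indicator (L t) y * (T ^^ j) (U f) (y, t) = indicator (L t) y * kpow H t j f y"
      using Suc.IH[of y] t by (cases "y \<in> L t") (auto simp: Krho_def level_def)
  qed
  also have "\<dots> = (\<integral> y. kpow H t j f y \<partial>H t x)"
  proof (intro integral_cong_AE)
    have "N.prob (L t) = 1" using H_markov t xL by (auto simp: measure_def)
    then show "AE y in H t x. indicator (L t) y * kpow H t j f y = kpow H t j f y"
      by (auto dest!: N.AE_prob_1 elim!: eventually_mono)
    show "(\<lambda>y. indicator (L t) y * kpow H t j f y) \<in> borel_measurable (H t x)"
         "kpow H t j f \<in> borel_measurable (H t x)"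
      using kpow_meas[OF t f, of j] by (auto simp: sN cong: measurable_cong_sets)
  qed
  finally show ?case by simp
qed

lemma Hk_avg:
  assumes f[measurable]: "f \<in> borel_measurable borel" and j: "1 \<le> j"
  shows "Hk \<rho> H j f x = avg ((T ^^ j) (U f)) x"
proof -
  have "(LINT t:{0..\<rho> x}|lborel. kpow H t j f x) = (LINT t:{0..\<rho> x}|lborel. (T ^^ j) (U f) (x, t))"
  proof (intro set_lebesgue_integral_cong allI impI)
    fix t assume t: "t \<in> {0..\<rho> x}"
    show "kpow H t j f x = (T ^^ j) (U f) (x, t)"
    proof (cases "x \<in> K")
      case True then show ?thesis using t by (intro kpow_T) (auto simp: Krho_def)
    next
      case False
      obtain i where i: "j = Suc i" using j by (cases j) auto
      have "H t x = null_measure borel" using H_zero t False by (auto simp: level_def)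
      then show ?thesis using False by (simp add: i T_def Krho_def)
    qed
  qed auto
  then show ?thesis by (simp add: Hk_def avg_def)
qed

end



context slice begin

definition ip :: "('a \<times> real \<Rightarrow> real) \<Rightarrow> ('a \<times> real \<Rightarrow> real) \<Rightarrow> real" where
  "ip F G = (\<integral> p. F p * G p \<partial>\<mu>)"

definition V :: "('a \<times> real \<Rightarrow> real) set" where
  "V = {F. F \<in> L2 \<mu> \<and> (\<forall>p. p \<notin> KR \<longrightarrow> F p = 0)}"

lemma V_L2: "F \<in> V \<Longrightarrow> F \<in> L2 \<mu>" by (simp add: V_def)

lemma V_lin: "F \<in> V \<Longrightarrow> G \<in> V \<Longrightarrow> (\<lambda>p. F p + c * G p) \<in> V"
  by (auto simp: V_def intro: L2_lin)

lemma T_V: "F \<in> L2 \<mu> \<Longrightarrow> T F \<in> V"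
  using T_L2(1)[of F] by (auto simp: V_def T_zero)

lemma ip_comm: "ip F G = ip G F" by (simp add: ip_def mult.commute)

lemma ip_T_sym: "F \<in> L2 \<mu> \<Longrightarrow> G \<in> L2 \<mu> \<Longrightarrow> ip (T F) G = ip F (T G)"
  unfolding ip_def by (rule T_sym)

lemma ip_cong: assumes "AE p in \<mu>. F p = F' p" "F \<in> L2 \<mu>" "F' \<in> L2 \<mu>" "G \<in> L2 \<mu>"
  shows "ip F G = ip F' G"
proof -
  have [measurable]: "F \<in> borel_measurable (borel \<Otimes>\<^sub>M borel)" "F' \<in> borel_measurable (borel \<Otimes>\<^sub>M borel)"
     "G \<in> borel_measurable (borel \<Otimes>\<^sub>M borel)" using assms by (auto intro: L2_mu_meas)
  show ?thesis unfolding ip_def using assms(1)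
    by (intro int_cong_mu) (auto elim!: eventually_mono)
qed

lemma ip_lin1: assumes "F \<in> L2 \<mu>" "F' \<in> L2 \<mu>" "G \<in> L2 \<mu>"
  shows "ip (\<lambda>p. F p + c * F' p) G = ip F G + c * ip F' G"
proof -
  have "ip (\<lambda>p. F p + c * F' p) G = (\<integral> p. F p * G p + c * (F' p * G p) \<partial>\<mu>)"
    unfolding ip_def by (simp add: algebra_simps)
  also have "\<dots> = ip F G + c * ip F' G"
    using L2_mult[OF assms(1,3)] L2_mult[OF assms(2,3)] by (simp add: ip_def)
  finally show ?thesis .
qed

lemma ip_lin2: assumes "F \<in> L2 \<mu>" "G \<in> L2 \<mu>" "G' \<in> L2 \<mu>"
  shows "ip F (\<lambda>p. G p + c * G' p) = ip F G + c * ip F G'"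
  using ip_lin1[OF assms(2,3,1), of c] by (simp add: ip_comm)

lemma T_V_eq: assumes "F \<in> V" shows "T F p * F p = Htilde K \<rho> H F p * F p"
proof (cases "p \<in> KR")
  case False
  then have "F p = 0" using assms unfolding V_def by blast
  then show ?thesis by simp
next
  case True
  obtain x s where p: "p = (x, s)" by (cases p)
  with True have s: "0 \<le> s" by (auto simp: Krho_def)
  show ?thesis using True s by (simp add: p T_def Htilde_def H'_pos)
qed

lemma psd_T: assumes F: "F \<in> V" shows "0 \<le> ip (T F) F"
proof -
  have "0 \<le> (\<integral> p. Htilde K \<rho> H F p * F p \<partial>\<mu>)" using Htilde_psd F by (auto simp: psd_def V_def)
  also have "\<dots> = ip (T F) F" unfolding ip_def
  proof -
    have "(\<lambda>p. Htilde K \<rho> H F p * F p) = (\<lambda>p. T F p * F p)" by (rule ext) (simp add: T_V_eq[OF F])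
    then show "(\<integral> p. Htilde K \<rho> H F p * F p \<partial>\<mu>) = (\<integral> p. T F p * F p \<partial>\<mu>)" by simp
  qed
  finally show ?thesis .
qed

lemma cs_T:
  assumes u: "u \<in> V" and v: "v \<in> V"
  shows "(ip (T u) v)^2 \<le> ip (T u) u * ip (T v) v"
proof (rule quad_cs)
  show "0 \<le> ip (T v) v" by (rule psd_T[OF v])
  fix t :: real
  define w where "w = (\<lambda>p. u p + (-t) * v p)"
  have w: "w \<in> V" unfolding w_def by (intro V_lin u v)
  have uL: "u \<in> L2 \<mu>" and vL: "v \<in> L2 \<mu>" using u v by (auto simp: V_def)
  have TuL: "T u \<in> L2 \<mu>" and TvL: "T v \<in> L2 \<mu>" using T_L2 uL vL by auto
  have "ip (T w) w = ip (\<lambda>p. T u p + (-t) * T v p) w"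
    using T_lin[OF uL vL, of "-t"] T_L2(1)[OF V_L2[OF w]] L2_lin[OF TuL TvL, of "-t"] V_L2[OF w]
    by (intro ip_cong) (auto simp: w_def)
  also have "\<dots> = ip (T u) w - t * ip (T v) w"
    using ip_lin1[OF TuL TvL V_L2[OF w], of "-t"] by simp
  also have "ip (T u) w = ip (T u) u - t * ip (T u) v"
    unfolding w_def using ip_lin2[OF TuL uL vL, of "-t"] by simp
  also have "ip (T v) w = ip (T v) u - t * ip (T v) v"
    unfolding w_def using ip_lin2[OF TvL uL vL, of "-t"] by simp
  also have "ip (T v) u = ip (T u) v"
    using ip_T_sym[OF vL uL] by (simp add: ip_comm)
  finally have "ip (T w) w = ip (T u) u - 2 * t * ip (T u) v + t^2 * ip (T v) v"
    by (simp add: power2_eq_square algebra_simps)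
  then show "0 \<le> ip (T u) u - 2 * t * ip (T u) v + t^2 * ip (T v) v"
    using psd_T[OF w] by simp
qed

lemma cs_ip: assumes "u \<in> L2 \<mu>" "v \<in> L2 \<mu>" shows "(ip u v)^2 \<le> ip u u * ip v v"
  using L2_cs[OF assms] by (simp add: ip_def power2_eq_square)

lemma ip_self_nonneg: "0 \<le> ip u u"
  unfolding ip_def by simp


lemma one_L2: "indicator KR \<in> L2 \<mu>"
proof -
  interpret prob_space \<pi> by (rule prob_pi)
  have "(\<lambda>_. 1::real) \<in> L2 \<pi>" by (rule L2_const) (rule finite_measure_axioms)
  from U_L2[OF this] show ?thesis by (simp add: U_one)
qed

lemma one_V: "indicator KR \<in> V"
  using one_L2 by (simp add: V_def)

lemma const_L2_pi: "(\<lambda>_. c::real) \<in> L2 \<pi>"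
proof -
  interpret prob_space \<pi> by (rule prob_pi)
  show ?thesis by (rule L2_const) (rule finite_measure_axioms)
qed

lemma Hk_L2: assumes f: "f \<in> L2 \<pi>" and j: "1 \<le> j" shows "Hk \<rho> H j f \<in> L2 \<pi>"
proof -
  have [measurable]: "f \<in> borel_measurable borel" using f by (rule L2_pi_meas)
  have i: "(T ^^ i) (U f) \<in> L2 \<mu>" for i
    by (induction i) (auto intro: U_L2[OF f] T_L2(1))
  have "Hk \<rho> H j f = avg ((T ^^ j) (U f))" by (rule ext) (rule Hk_avg[OF _ j]; simp)
  with avg_L2(1)[OF i] show ?thesis by simp
qed

lemma moment_ineq:
  assumes f: "f \<in> L2 \<pi>" and k: "1 \<le> k"
  shows "(\<integral> x. (Hk \<rho> H 1 f x - (\<integral> y. f y \<partial>\<pi>)) * f x \<partial>\<pi>) ^ k \<le>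
     (\<integral> x. (f x)^2 \<partial>\<pi>) ^ (k - 1) * (\<integral> x. (Hk \<rho> H k f x - (\<integral> y. f y \<partial>\<pi>)) * f x \<partial>\<pi>)"
    and "0 \<le> (\<integral> x. (Hk \<rho> H 1 f x - (\<integral> y. f y \<partial>\<pi>)) * f x \<partial>\<pi>)"
proof -
  define c where "c = (\<integral> y. f y \<partial>\<pi>)"
  have [measurable]: "f \<in> borel_measurable borel" using f by (rule L2_pi_meas)
  define Tj where "Tj j = (T ^^ j) (U f)" for j
  have Tj_Suc: "Tj (Suc j) = T (Tj j)" for j by (simp add: Tj_def)
  have Tj_V: "Tj j \<in> V" for j
  proof (cases j)
    case 0 then show ?thesis using U_L2[OF f] by (simp add: Tj_def V_def U_def)
  next
    case (Suc i)
    have "(T ^^ i) (U f) \<in> L2 \<mu>" by (induction i) (auto intro: U_L2[OF f] T_L2(1))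
    then show ?thesis by (simp add: Suc Tj_def T_V)
  qed
  have Tj_L2: "Tj j \<in> L2 \<mu>" for j using Tj_V[of j] by (rule V_L2)
  define y where "y j = (\<lambda>p. Tj j p + (-c) * indicator KR p)" for j
  have y_V: "y j \<in> V" for j unfolding y_def by (intro V_lin Tj_V one_V)
  have y_L2: "y j \<in> L2 \<mu>" for j using y_V[of j] by (rule V_L2)
  have Ty: "AE p in \<mu>. T (y j) p = y (Suc j) p" for j
    using T_lin[OF Tj_L2[of j] one_L2, of "-c"] by eventually_elim (simp add: y_def Tj_Suc T_KR[abs_def])
  have ipTy: "ip (T (y j)) G = ip (y (Suc j)) G" if "G \<in> L2 \<mu>" for j G
    using Ty[of j] T_L2(1)[OF y_L2] y_L2 that by (intro ip_cong)
  have shift: "ip (y (Suc a)) (y b) = ip (y a) (y (Suc b))" for a b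
  proof -
    have "ip (y (Suc a)) (y b) = ip (T (y a)) (y b)" using ipTy[OF y_L2] by simp
    also have "\<dots> = ip (y a) (T (y b))" using ip_T_sym[OF y_L2 y_L2] by simp
    also have "\<dots> = ip (T (y b)) (y a)" by (rule ip_comm)
    also have "\<dots> = ip (y (Suc b)) (y a)" using ipTy[OF y_L2] by simp
    finally show ?thesis by (simp add: ip_comm)
  qed
  define m where "m n = ip (y n) (y 0)" for n
  have ipm: "ip (y a) (y b) = m (a + b)" for a b
  proof (induction a arbitrary: b)
    case 0 then show ?case by (simp add: m_def ip_comm)
  next
    case (Suc a) then show ?case using shift[of a b] by simp
  qed
  have m_nn: "0 \<le> m n" for n
  proof (cases "even n")
    case True then obtain a where n: "n = a + a" by (metis evenE mult_2)
    show ?thesis using ipm[of a a] ip_self_nonneg[of "y a"] by (simp add: n)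
  next
    case False then obtain a where n: "n = Suc (a + a)" by (metis oddE mult_2 Suc_eq_plus1)
    have "m n = ip (y (Suc a)) (y a)" using ipm[of "Suc a" a] by (simp add: n)
    also have "\<dots> = ip (T (y a)) (y a)" using ipTy[OF y_L2] by simp
    finally show ?thesis using psd_T[OF y_V] by simp
  qed
  have lc: "(m (Suc n))^2 \<le> m n * m (Suc (Suc n))" for n
  proof (cases "even n")
    case True then obtain a where n: "n = a + a" by (metis evenE mult_2)
    have "(m (Suc n))^2 = (ip (y (Suc a)) (y a))^2" using ipm[of "Suc a" a] by (simp add: n)
    also have "\<dots> \<le> ip (y (Suc a)) (y (Suc a)) * ip (y a) (y a)" by (rule cs_ip[OF y_L2 y_L2])
    also have "\<dots> = m n * m (Suc (Suc n))" using ipm[of "Suc a" "Suc a"] ipm[of a a] by (simp add: n)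
    finally show ?thesis .
  next
    case False then obtain a where n: "n = Suc (a + a)" by (metis oddE mult_2 Suc_eq_plus1)
    have "(m (Suc n))^2 = (ip (T (y a)) (y (Suc a)))^2"
      using ipm[of "Suc a" "Suc a"] ipTy[OF y_L2, of a "Suc a"] by (simp add: n)
    also have "\<dots> \<le> ip (T (y a)) (y a) * ip (T (y (Suc a))) (y (Suc a))" by (rule cs_T[OF y_V y_V])
    also have "\<dots> = m n * m (Suc (Suc n))"
      using ipm[of "Suc a" a] ipm[of "Suc (Suc a)" "Suc a"] ipTy[OF y_L2, of a a] ipTy[OF y_L2, of "Suc a" "Suc a"]
      by (simp add: n)
    finally show ?thesis .
  qed
  obtain j where kj: "k = Suc j" using k by (cases k) auto
  have mom: "m 1 ^ k \<le> m 0 ^ (k - 1) * m k"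
    using moments[of m j, OF m_nn lc] by (simp add: kj)
  have one_eq: "indicator KR = U (\<lambda>_. 1)" by (simp add: U_one)
  have ip_one_one: "ip (indicator KR) (indicator KR) = 1"
  proof -
    interpret prob_space \<pi> by (rule prob_pi)
    show ?thesis unfolding one_eq ip_def by (subst U_inner) (auto intro: const_L2_pi simp: prob_space)
  qed
  have ip_Uf_one: "ip (U f) (indicator KR) = c"
    unfolding one_eq ip_def c_def by (subst U_inner[OF f const_L2_pi]) simp
  have ip_Tj_one: "ip (Tj n) (indicator KR) = c" for n
  proof (induction n)
    case 0 then show ?case using ip_Uf_one by (simp add: Tj_def)
  next
    case (Suc n)
    have "ip (Tj (Suc n)) (indicator KR) = ip (Tj n) (T (indicator KR))"
      unfolding Tj_Suc by (rule ip_T_sym[OF Tj_L2 one_L2])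
    also have "T (indicator KR) = indicator KR" by (simp add: T_KR[abs_def])
    finally show ?case using Suc by simp
  qed
  have m_eq: "m n = ip (Tj n) (U f) - c^2" for n
  proof -
    have "m n = ip (\<lambda>p. Tj n p + (-c) * indicator KR p) (\<lambda>p. Tj 0 p + (-c) * indicator KR p)"
      by (simp add: m_def y_def)
    also have "\<dots> = ip (Tj n) (Tj 0) - c * ip (Tj n) (indicator KR) - c * ip (indicator KR) (Tj 0) + c^2 * ip (indicator KR) (indicator KR)"
    proof -
      have Y0: "(\<lambda>p. Tj 0 p + (-c) * indicator KR p) \<in> L2 \<mu>" using y_L2[of 0] by (simp add: y_def)
      note e1 = ip_lin1[OF Tj_L2[of n] one_L2 Y0, of "-c"]
      note e2 = ip_lin2[OF Tj_L2[of n] Tj_L2[of 0] one_L2, of "-c"]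
      note e3 = ip_lin2[OF one_L2 Tj_L2[of 0] one_L2, of "-c"]
      show ?thesis unfolding e1 e2 e3 by (simp add: algebra_simps power2_eq_square)
    qed
    also have "\<dots> = ip (Tj n) (U f) - c^2"
      using ip_Tj_one[of n] ip_Tj_one[of 0] ip_one_one ip_comm[of "indicator KR" "Tj 0"]
      by (simp add: Tj_def power2_eq_square)
    finally show ?thesis .
  qed
  have m_pi: "m n = (\<integral> x. (Hk \<rho> H n f x - c) * f x \<partial>\<pi>)" if n: "1 \<le> n" for n
  proof -
    have "ip (Tj n) (U f) = (\<integral> x. avg (Tj n) x * f x \<partial>\<pi>)"
      unfolding ip_def by (rule avg_inner[OF Tj_L2 f, symmetric])
    also have "\<dots> = (\<integral> x. Hk \<rho> H n f x * f x \<partial>\<pi>)"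
      using Hk_avg[OF _ n, of f] by (simp add: Tj_def)
    finally have e: "ip (Tj n) (U f) = (\<integral> x. Hk \<rho> H n f x * f x \<partial>\<pi>)" .
    have "(\<integral> x. (Hk \<rho> H n f x - c) * f x \<partial>\<pi>) = (\<integral> x. Hk \<rho> H n f x * f x - c * f x \<partial>\<pi>)"
      by (simp add: algebra_simps)
    also have "\<dots> = (\<integral> x. Hk \<rho> H n f x * f x \<partial>\<pi>) - c * c"
      using L2_mult[OF Hk_L2[OF f n] f] L2_mult[OF const_L2_pi f, of c]
      by (simp add: c_def)
    finally show ?thesis using m_eq[of n] e by (simp add: power2_eq_square)
  qed
  have m0: "m 0 \<le> (\<integral> x. (f x)^2 \<partial>\<pi>)"
  proof -
    have "m 0 = ip (U f) (U f) - c^2" using m_eq[of 0] by (simp add: Tj_def)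
    also have "ip (U f) (U f) = (\<integral> x. (f x)^2 \<partial>\<pi>)"
      unfolding ip_def using U_inner[OF f f] by (simp add: power2_eq_square)
    finally show ?thesis by simp
  qed
  have "m 1 ^ k \<le> (\<integral> x. (f x)^2 \<partial>\<pi>) ^ (k - 1) * m k"
  proof -
    have "m 0 ^ (k - 1) \<le> (\<integral> x. (f x)^2 \<partial>\<pi>) ^ (k - 1)" by (rule power_mono[OF m0 m_nn])
    then have "m 0 ^ (k - 1) * m k \<le> (\<integral> x. (f x)^2 \<partial>\<pi>) ^ (k - 1) * m k" by (rule mult_right_mono) (rule m_nn)
    with mom show ?thesis by (rule order_trans)
  qed
  then show "(\<integral> x. (Hk \<rho> H 1 f x - (\<integral> y. f y \<partial>\<pi>)) * f x \<partial>\<pi>) ^ k \<le>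
     (\<integral> x. (f x)^2 \<partial>\<pi>) ^ (k - 1) * (\<integral> x. (Hk \<rho> H k f x - (\<integral> y. f y \<partial>\<pi>)) * f x \<partial>\<pi>)"
    using m_pi[of 1] m_pi[OF k] by (simp add: c_def)
  show "0 \<le> (\<integral> x. (Hk \<rho> H 1 f x - (\<integral> y. f y \<partial>\<pi>)) * f x \<partial>\<pi>)"
    using m_pi[of 1] m_nn[of 1] by (simp add: c_def)
qed

end



context slice begin

abbreviation "S f \<equiv> (\<integral> y. f y \<partial>\<pi>)"

definition Pf :: "('a \<Rightarrow> real) \<Rightarrow> ('a \<Rightarrow> real) \<Rightarrow> real" where
  "Pf u v = (\<integral> x. (Hk \<rho> H 1 u x - S u) * v x \<partial>\<pi>)"

lemma int_L2_pi: "u \<in> L2 \<pi> \<Longrightarrow> integrable \<pi> u"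
  using L2_mult[OF const_L2_pi, of u 1] by simp

lemma P_eq: assumes u: "u \<in> L2 \<pi>" and v: "v \<in> L2 \<pi>"
  shows "Pf u v = ip (T (U u)) (U v) - S u * S v"
proof -
  have [measurable]: "u \<in> borel_measurable borel" using u by (rule L2_pi_meas)
  have Hk1: "Hk \<rho> H 1 u = avg (T (U u))" by (rule ext) (simp add: Hk_avg)
  have "Pf u v = (\<integral> x. Hk \<rho> H 1 u x * v x - S u * v x \<partial>\<pi>)"
    unfolding Pf_def by (simp add: algebra_simps)
  also have "\<dots> = (\<integral> x. Hk \<rho> H 1 u x * v x \<partial>\<pi>) - S u * S v"
    using L2_mult[OF Hk_L2[OF u, of 1] v] int_L2_pi[OF v] by simp
  also have "(\<integral> x. Hk \<rho> H 1 u x * v x \<partial>\<pi>) = ip (T (U u)) (U v)"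
    unfolding Hk1 ip_def by (rule avg_inner[OF T_L2(1)[OF U_L2[OF u]] v])
  finally show ?thesis .
qed

lemma P_sym: assumes u: "u \<in> L2 \<pi>" and v: "v \<in> L2 \<pi>" shows "Pf u v = Pf v u"
  using P_eq[OF u v] P_eq[OF v u] ip_T_sym[OF U_L2[OF u] U_L2[OF v]] ip_comm[of "U u" "T (U v)"]
  by simp

lemma P_nn: assumes u: "u \<in> L2 \<pi>" shows "0 \<le> Pf u u"
  using moment_ineq(2)[OF u, of 1] by (simp add: Pf_def)

lemma U_lin: "U (\<lambda>x. u x + c * v x) = (\<lambda>p. U u p + c * U v p)"
  by (rule ext) (simp add: U_def algebra_simps)

lemma P_cs: assumes u: "u \<in> L2 \<pi>" and v: "v \<in> L2 \<pi>"
  shows "(Pf u v)^2 \<le> Pf u u * Pf v v"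
proof (rule quad_cs)
  show "0 \<le> Pf v v" by (rule P_nn[OF v])
  fix t :: real
  define w where "w = (\<lambda>x. u x + (-t) * v x)"
  have w: "w \<in> L2 \<pi>" unfolding w_def by (rule L2_lin[OF u v])
  have Uu: "U u \<in> L2 \<mu>" and Uv: "U v \<in> L2 \<mu>" using U_L2 u v by auto
  have TUu: "T (U u) \<in> L2 \<mu>" and TUv: "T (U v) \<in> L2 \<mu>" using T_L2 Uu Uv by auto
  have Uw: "U w = (\<lambda>p. U u p + (-t) * U v p)" unfolding w_def by (rule U_lin)
  have Sw: "S w = S u - t * S v" unfolding w_def using int_L2_pi[OF u] int_L2_pi[OF v] by simp
  have "ip (T (U w)) (U w) = ip (\<lambda>p. T (U u) p + (-t) * T (U v) p) (U w)"
    unfolding Uw using T_lin[OF Uu Uv, of "-t"] T_L2(1)[OF L2_lin[OF Uu Uv, of "-t"]] L2_lin[OF TUu TUv, of "-t"]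
      L2_lin[OF Uu Uv, of "-t"]
    by (intro ip_cong) auto
  also have "\<dots> = ip (T (U u)) (U w) - t * ip (T (U v)) (U w)"
    using ip_lin1[OF TUu TUv U_L2[OF w], of "-t"] by simp
  also have "ip (T (U u)) (U w) = ip (T (U u)) (U u) - t * ip (T (U u)) (U v)"
    unfolding Uw using ip_lin2[OF TUu Uu Uv, of "-t"] by simp
  also have "ip (T (U v)) (U w) = ip (T (U v)) (U u) - t * ip (T (U v)) (U v)"
    unfolding Uw using ip_lin2[OF TUv Uu Uv, of "-t"] by simp
  also have "ip (T (U v)) (U u) = ip (T (U u)) (U v)"
    using ip_T_sym[OF Uv Uu] ip_comm[of "U v" "T (U u)"] by simp
  finally have e: "ip (T (U w)) (U w) = ip (T (U u)) (U u) - 2 * t * ip (T (U u)) (U v) + t^2 * ip (T (U v)) (U v)"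
    by (simp add: power2_eq_square algebra_simps)
  have "Pf w w = Pf u u - 2 * t * Pf u v + t^2 * Pf v v"
    unfolding P_eq[OF w w] P_eq[OF u u] P_eq[OF u v] P_eq[OF v v] e Sw
    by (simp add: power2_eq_square algebra_simps)
  then show "0 \<le> Pf u u - 2 * t * Pf u v + t^2 * Pf v v" using P_nn[OF w] by simp
qed


lemma A_L2: assumes u: "u \<in> L2 \<pi>" and j: "1 \<le> j" shows "(\<lambda>x. Hk \<rho> H j u x - S u) \<in> L2 \<pi>"
  using L2_diff[OF Hk_L2[OF u j] const_L2_pi] .

lemma P_bound:
  assumes k: "1 \<le> k" and b: "0 \<le> b"
    and hk: "\<And>g. g \<in> L2 \<pi> \<Longrightarrow> (\<integral> x. (Hk \<rho> H k g x - S g)^2 \<partial>\<pi>) \<le> b^2 * (\<integral> x. (g x)^2 \<partial>\<pi>)"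
    and u: "u \<in> L2 \<pi>"
  shows "Pf u u \<le> root k b * (\<integral> x. (u x)^2 \<partial>\<pi>)"
proof -
  define N where "N = (\<integral> x. (u x)^2 \<partial>\<pi>)"
  have N: "0 \<le> N" by (simp add: N_def)
  have Ak: "(\<lambda>x. Hk \<rho> H k u x - S u) \<in> L2 \<pi>" by (rule A_L2[OF u k])
  have "(\<integral> x. (Hk \<rho> H k u x - S u) * u x \<partial>\<pi>) \<le> sqrt (\<integral> x. (Hk \<rho> H k u x - S u)^2 \<partial>\<pi>) * sqrt N"
    unfolding N_def by (rule L2_cs'[OF Ak u])
  also have "\<dots> \<le> sqrt (b^2 * N) * sqrt N"
    using hk[OF u] N by (intro mult_right_mono real_sqrt_le_mono) (auto simp: N_def)
  also have "\<dots> = b * N" using b N by (simp add: real_sqrt_mult)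
  finally have mk: "(\<integral> x. (Hk \<rho> H k u x - S u) * u x \<partial>\<pi>) \<le> b * N" .
  have "(Pf u u) ^ k \<le> N ^ (k - 1) * (\<integral> x. (Hk \<rho> H k u x - S u) * u x \<partial>\<pi>)"
    using moment_ineq(1)[OF u k] by (simp add: Pf_def N_def)
  also have "\<dots> \<le> N ^ (k - 1) * (b * N)" using mk N by (intro mult_left_mono) auto
  also have "\<dots> = b * N ^ k" using k by (cases k) auto
  finally have pk: "(Pf u u) ^ k \<le> b * N ^ k" .
  have "Pf u u = root k ((Pf u u) ^ k)" using P_nn[OF u] k by (simp add: real_root_power_cancel)
  also have "\<dots> \<le> root k (b * N ^ k)" using pk k by (simp add: real_root_le_iff)
  also have "\<dots> = root k b * N" using k N by (simp add: real_root_mult real_root_power_cancel)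
  finally show ?thesis by (simp add: N_def)
qed

lemma A1_bound:
  assumes k: "1 \<le> k" and b: "0 \<le> b"
    and hk: "\<And>g. g \<in> L2 \<pi> \<Longrightarrow> (\<integral> x. (Hk \<rho> H k g x - S g)^2 \<partial>\<pi>) \<le> b^2 * (\<integral> x. (g x)^2 \<partial>\<pi>)"
    and u: "u \<in> L2 \<pi>"
  shows "(\<integral> x. (Hk \<rho> H 1 u x - S u)^2 \<partial>\<pi>) \<le> (root k b)^2 * (\<integral> x. (u x)^2 \<partial>\<pi>)"
proof -
  define v where "v = (\<lambda>x. Hk \<rho> H 1 u x - S u)"
  have v: "v \<in> L2 \<pi>" unfolding v_def by (rule A_L2[OF u]) simp
  define \<beta> where "\<beta> = root k b"
  have \<beta>: "0 \<le> \<beta>" using b by (simp add: \<beta>_def real_root_ge_zero)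
  define Nv where "Nv = (\<integral> x. (v x)^2 \<partial>\<pi>)"
  define Nu where "Nu = (\<integral> x. (u x)^2 \<partial>\<pi>)"
  have Nv: "0 \<le> Nv" and Nu: "0 \<le> Nu" by (simp_all add: Nv_def Nu_def)
  have Puv: "Pf u v = Nv" by (simp add: Pf_def Nv_def v_def power2_eq_square)
  have "Nv^2 \<le> Pf u u * Pf v v" using P_cs[OF u v] by (simp add: Puv)
  also have "\<dots> \<le> (\<beta> * Nu) * (\<beta> * Nv)"
    using P_bound[OF k b hk u] P_bound[OF k b hk v] P_nn[OF u] P_nn[OF v] \<beta> Nu Nv
    by (intro mult_mono) (auto simp: \<beta>_def Nu_def Nv_def)
  finally have "Nv * Nv \<le> (\<beta>^2 * Nu) * Nv" by (simp add: power2_eq_square algebra_simps)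
  then have "Nv \<le> \<beta>^2 * Nu"
    using Nv by (cases "Nv = 0") (auto simp: \<beta> Nu intro: mult_right_le_imp_le)
  then show ?thesis by (simp add: Nv_def Nu_def v_def \<beta>_def)
qed


lemma main:
  assumes k: "1 \<le> k"
  shows "opnorm \<pi> (\<lambda>f x. Hk \<rho> H 1 f x - S f) ^ k \<le> opnorm \<pi> (\<lambda>f x. Hk \<rho> H k f x - S f)"
proof -
  have "opnorm \<pi> (\<lambda>f x. Hk \<rho> H 1 f x - S f) ^ k \<le> c"
    if c: "c \<in> {c. \<forall>f \<in> L2 \<pi>. (\<integral>\<^sup>+ x. ennreal ((Hk \<rho> H k f x - S f)^2) \<partial>\<pi>) \<le> c^2 * (\<integral>\<^sup>+ x. ennreal ((f x)^2) \<partial>\<pi>)}" for c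
  proof (cases c)
    case top then show ?thesis by simp
  next
    case (real b)
    then have c_eq: "c = ennreal b" and b: "0 \<le> b" by auto
    have hk: "(\<integral> x. (Hk \<rho> H k g x - S g)^2 \<partial>\<pi>) \<le> b^2 * (\<integral> x. (g x)^2 \<partial>\<pi>)" if g: "g \<in> L2 \<pi>" for g
    proof -
      have "ennreal (\<integral> x. (Hk \<rho> H k g x - S g)^2 \<partial>\<pi>) = (\<integral>\<^sup>+ x. ennreal ((Hk \<rho> H k g x - S g)^2) \<partial>\<pi>)"
        using L2_nn[OF A_L2[OF g k]] by simp
      also have "\<dots> \<le> c^2 * (\<integral>\<^sup>+ x. ennreal ((g x)^2) \<partial>\<pi>)" using c g by auto
      also have "\<dots> = ennreal (b^2 * (\<integral> x. (g x)^2 \<partial>\<pi>))"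
        using L2_nn[OF g] b by (simp add: c_eq ennreal_mult ennreal_power)
      finally show ?thesis by (subst (asm) ennreal_le_iff) (auto intro!: mult_nonneg_nonneg)
    qed
    define \<beta> where "\<beta> = root k b"
    have \<beta>: "0 \<le> \<beta>" using b by (simp add: \<beta>_def real_root_ge_zero)
    have mem: "ennreal \<beta> \<in> {c. \<forall>f \<in> L2 \<pi>. (\<integral>\<^sup>+ x. ennreal ((Hk \<rho> H 1 f x - S f)^2) \<partial>\<pi>) \<le> c^2 * (\<integral>\<^sup>+ x. ennreal ((f x)^2) \<partial>\<pi>)}"
    proof (intro CollectI ballI)
      fix f assume f: "f \<in> L2 \<pi>"
      have "(\<integral>\<^sup>+ x. ennreal ((Hk \<rho> H 1 f x - S f)^2) \<partial>\<pi>) = ennreal (\<integral> x. (Hk \<rho> H 1 f x - S f)^2 \<partial>\<pi>)"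
        using L2_nn[OF A_L2[OF f, of 1]] by simp
      also have "\<dots> \<le> ennreal (\<beta>^2 * (\<integral> x. (f x)^2 \<partial>\<pi>))"
        using A1_bound[OF k b hk f] by (intro ennreal_leI) (simp add: \<beta>_def)
      also have "\<dots> = (ennreal \<beta>)^2 * (\<integral>\<^sup>+ x. ennreal ((f x)^2) \<partial>\<pi>)"
        using L2_nn[OF f] \<beta> by (simp add: ennreal_mult ennreal_power)
      finally show "(\<integral>\<^sup>+ x. ennreal ((Hk \<rho> H 1 f x - S f)^2) \<partial>\<pi>) \<le> (ennreal \<beta>)^2 * (\<integral>\<^sup>+ x. ennreal ((f x)^2) \<partial>\<pi>)" .
    qed
    have "opnorm \<pi> (\<lambda>f x. Hk \<rho> H 1 f x - S f) \<le> ennreal \<beta>"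
      unfolding opnorm_def using mem by (rule Inf_lower)
    then have "opnorm \<pi> (\<lambda>f x. Hk \<rho> H 1 f x - S f) ^ k \<le> (ennreal \<beta>) ^ k"
      by (rule power_mono) simp
    also have "\<dots> = ennreal b" using \<beta> b k by (simp add: ennreal_power \<beta>_def)
    finally show ?thesis by (simp add: c_eq)
  qed
  then show ?thesis unfolding opnorm_def[of _ "\<lambda>f x. Hk \<rho> H k f x - S f"]
    by (intro Inf_greatest) simp
qed

end

theorem lemma3p6:
  fixes K :: "'a::euclidean_space set" and \<rho> :: "'a \<Rightarrow> real"
    and H :: "real \<Rightarrow> 'a \<Rightarrow> 'a measure" and k :: nat
  assumes K_borel: "K \<in> sets borel"
    and rho_meas: "\<rho> \<in> borel_measurable borel"
    and rho_nonneg: "\<forall>x\<in>K. 0 \<le> \<rho> x"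
    and rho_int_pos: "0 < (\<integral>\<^sup>+ x. ennreal (indicator K x * \<rho> x) \<partial>lborel)"
    and rho_int_fin: "(\<integral>\<^sup>+ x. ennreal (indicator K x * \<rho> x) \<partial>lborel) < \<infinity>"
    and level_vol: "\<forall>t. 0 < t \<and> ereal t < esssup lborel (\<lambda>x. ereal (indicator K x * \<rho> x)) \<longrightarrow>
        0 < emeasure lborel (level K \<rho> t) \<and> emeasure lborel (level K \<rho> t) < \<infinity>"
    and H_markov: "\<forall>t\<ge>0. \<forall>x \<in> level K \<rho> t.
        prob_space (H t x) \<and> sets (H t x) = sets borel \<and> emeasure (H t x) (level K \<rho> t) = 1"
    and H_zero: "\<forall>t\<ge>0. \<forall>x. x \<notin> level K \<rho> t \<longrightarrow> H t x = null_measure borel"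
    and H_meas: "(\<lambda>(t, x). H t x) \<in> measurable (restrict_space borel {0..} \<Otimes>\<^sub>M borel) (subprob_algebra borel)"
    and H_rev: "\<forall>t\<ge>0. 0 < emeasure lborel (level K \<rho> t) \<and> emeasure lborel (level K \<rho> t) < \<infinity> \<longrightarrow>
        (\<forall>A \<in> sets borel. \<forall>B \<in> sets borel. A \<subseteq> level K \<rho> t \<longrightarrow> B \<subseteq> level K \<rho> t \<longrightarrow>
          (\<integral>\<^sup>+ x. indicator A x * emeasure (H t x) B \<partial>uniform_measure lborel (level K \<rho> t)) =
          (\<integral>\<^sup>+ x. indicator B x * emeasure (H t x) A \<partial>uniform_measure lborel (level K \<rho> t)))"
    and Htilde_psd: "psd (mu_meas K \<rho>) (Htilde K \<rho> H)"
    and k_pos: "1 \<le> k"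
  shows "opnorm (pi_meas K \<rho>) (\<lambda>f x. Hk \<rho> H 1 f x - (\<integral>y. f y \<partial>pi_meas K \<rho>)) ^ k
         \<le> opnorm (pi_meas K \<rho>) (\<lambda>f x. Hk \<rho> H k f x - (\<integral>y. f y \<partial>pi_meas K \<rho>))"
  proof -
  interpret slice K \<rho> H
    by unfold_locales (fact K_borel rho_meas rho_nonneg rho_int_pos rho_int_fin H_markov H_zero H_meas H_rev Htilde_psd)+
  show ?thesis using main[OF k_pos] .
qed

end
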